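(* Let $\Gamma$ be a finite connected $(G,2)$-distance-transitive graph of square-free order, where $G$ is soluble, and let $F$ be the Fitting subgroup of $G$. If $|F|$ is square-free, then $F$ does not have exactly $2$ orbits on $V(\Gamma)$.
   Context: For $G\le\mathrm{Aut}(\Gamma)$, $\Gamma$ is $(G,2)$-distance-transitive if its diameter is at least $2$, $G$ is vertex-transitive and $G_u$ is transitive on $\Gamma(u)$ and $\Gamma_2(u)$ for every vertex $u$. The Fitting subgroup is the subgroup generated by all nilpotent normal subgroups. *)

theory Defs
  imports "HOL-Algebra.Algebra" "HOL-Computational_Algebra.Squarefree"
begin

definition commutator_set :: "('g, 'b) monoid_scheme \<Rightarrow> 'g set \<Rightarrow> 'g set \<Rightarrow> 'g set" where
  "commutator_set G A B =
     {a \<otimes>\<^bsub>G\<^esub> b \<otimes>\<^bsub>G\<^esub> inv\<^bsub>G\<^esub> a \<otimes>\<^bsub>G\<^esub> inv\<^bsub>G\<^esub> b | a b. a \<in> A \<and> b \<in> B}"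

definition lower_central :: "('g, 'b) monoid_scheme \<Rightarrow> nat \<Rightarrow> 'g set" where
  "lower_central G n = ((\<lambda>K. generate G (commutator_set G K (carrier G))) ^^ n) (carrier G)"

definition nilpotent_grp :: "('g, 'b) monoid_scheme \<Rightarrow> bool" where
  "nilpotent_grp G \<longleftrightarrow> group G \<and> (\<exists>n. lower_central G n = {\<one>\<^bsub>G\<^esub>})"

definition Fitting :: "('g, 'b) monoid_scheme \<Rightarrow> 'g set" where
  "Fitting G = generate G (\<Union>{N. N \<lhd> G \<and> nilpotent_grp (G\<lparr>carrier := N\<rparr>)})"

fun reach :: "('a \<Rightarrow> 'a \<Rightarrow> bool) \<Rightarrow> nat \<Rightarrow> 'a \<Rightarrow> 'a \<Rightarrow> bool" where
  "reach adj 0 u v = (u = v)"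
| "reach adj (Suc n) u v = (\<exists>w. adj u w \<and> reach adj n w v)"

definition sphere :: "'a set \<Rightarrow> ('a \<Rightarrow> 'a \<Rightarrow> bool) \<Rightarrow> nat \<Rightarrow> 'a \<Rightarrow> 'a set" where
  "sphere V adj i u = {v \<in> V. reach adj i u v \<and> (\<forall>j<i. \<not> reach adj j u v)}"

definition simple_graph :: "'a set \<Rightarrow> ('a \<Rightarrow> 'a \<Rightarrow> bool) \<Rightarrow> bool" where
  "simple_graph V adj \<longleftrightarrow>
     (\<forall>x y. adj x y \<longrightarrow> x \<in> V \<and> y \<in> V) \<and> (\<forall>x y. adj x y \<longrightarrow> adj y x) \<and> (\<forall>x. \<not> adj x x)"

definition connected_graph :: "'a set \<Rightarrow> ('a \<Rightarrow> 'a \<Rightarrow> bool) \<Rightarrow> bool" where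
  "connected_graph V adj \<longleftrightarrow> (\<forall>u\<in>V. \<forall>v\<in>V. \<exists>n. reach adj n u v)"

definition aut_group :: "'a set \<Rightarrow> ('a \<Rightarrow> 'a \<Rightarrow> bool) \<Rightarrow> ('a \<Rightarrow> 'a) set \<Rightarrow> bool" where
  "aut_group V adj G \<longleftrightarrow> subgroup G (BijGroup V) \<and>
     (\<forall>g\<in>G. \<forall>x\<in>V. \<forall>y\<in>V. adj (g x) (g y) \<longleftrightarrow> adj x y)"

text \<open>(G,2)-distance-transitivity: diameter at least 2, G vertex-transitive,
  and each vertex stabiliser transitive on Gamma(u) and Gamma_2(u).\<close>
definition dist2_transitive :: "'a set \<Rightarrow> ('a \<Rightarrow> 'a \<Rightarrow> bool) \<Rightarrow> ('a \<Rightarrow> 'a) set \<Rightarrow> bool" where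
  "dist2_transitive V adj G \<longleftrightarrow>
     (\<exists>u\<in>V. \<exists>v\<in>V. \<forall>j\<le>1. \<not> reach adj j u v) \<and>
     (\<forall>u\<in>V. \<forall>v\<in>V. \<exists>g\<in>G. g u = v) \<and>
     (\<forall>u\<in>V. \<forall>i\<in>{1,2}. \<forall>v\<in>sphere V adj i u. \<forall>w\<in>sphere V adj i u.
         \<exists>g\<in>G. g u = u \<and> g v = w)"

definition vertex_orbits :: "('a \<Rightarrow> 'a) set \<Rightarrow> 'a set \<Rightarrow> 'a set set" where
  "vertex_orbits H V = {(\<lambda>h. h v) ` H | v. v \<in> V}"

end

theory Submission
  imports Defs
begin

context group
begin

lemma pow_mod_p:
  assumes "x \<in> carrier G" "x [^] (p::nat) = \<one>"
  shows "x [^] (n::nat) = x [^] (n mod p)"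
proof -
  have "x [^] n = x [^] (p * (n div p) + n mod p)" using div_mult_mod_eq[of n p] by (simp add: mult.commute)
  also have "\<dots> = x [^] (p * (n div p)) \<otimes> x [^] (n mod p)"
    using nat_pow_mult[OF assms(1), of "p * (n div p)" "n mod p"] by simp
  also have "\<dots> = (x [^] p) [^] (n div p) \<otimes> x [^] (n mod p)"
    using nat_pow_pow[OF assms(1), of p "n div p"] by simp
  finally have "x [^] n = (x [^] p) [^] (n div p) \<otimes> x [^] (n mod p)" .
  then show ?thesis using assms by (simp add: nat_pow_one)
qed

lemma subgroup_nat_pow_closed:
  assumes "subgroup K G" "x \<in> K"
  shows "x [^] (n::nat) \<in> K"
proof (induct n)
  case 0 then show ?case using assms subgroup.one_closed by simp
next
  case (Suc n)
  have "x [^] Suc n = x [^] n \<otimes> x" by (simp only: nat_pow_Suc)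
  then show ?case using subgroup.m_closed[OF assms(1) Suc assms(2)] by simp
qed

lemma sqf_two_gen:
  assumes K: "subgroup K G" and sq: "squarefree (card K)" and fin: "finite K"
    and x: "x \<in> K" and d: "d \<in> K" and comm: "x \<otimes> d = d \<otimes> x" and p: "Factorial_Ring.prime (p::nat)"
    and xp: "x [^] p = \<one>" and dp: "d [^] p = \<one>" and x1: "x \<noteq> \<one>"
  shows "\<exists>i::nat. d = x [^] i"
proof (rule ccontr)
  assume nd: "\<not> (\<exists>i::nat. d = x [^] i)"
  have xc: "x \<in> carrier G" and dc: "d \<in> carrier G" using x d subgroup.mem_carrier[OF K] by auto
  have p0: "p > 1" using p prime_gt_1_nat by auto
  have ordx: "ord x = p"
  proof -
    have "ord x dvd p" using xp pow_eq_id xc by blast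
    moreover have "ord x \<noteq> 1" using ord_eq_1 xc x1 by auto
    ultimately show ?thesis using p unfolding prime_nat_iff by blast
  qed
  have comm': "\<And>(i::nat) (j::nat). x [^] i \<otimes> d [^] j = d [^] j \<otimes> x [^] i"
  proof -
    fix i j :: nat
    have "x [^] i \<otimes> d = d \<otimes> x [^] i"
    proof (induct i)
      case 0 then show ?case using dc by simp
    next
      case (Suc i)
      have "x [^] Suc i \<otimes> d = x [^] i \<otimes> (x \<otimes> d)" using xc dc by (simp add: m_assoc)
      also have "\<dots> = (x [^] i \<otimes> d) \<otimes> x" using xc dc comm by (simp add: m_assoc)
      also have "\<dots> = d \<otimes> x [^] Suc i" using Suc xc dc by (simp add: m_assoc)
      finally show ?case .
    qed
    then show "x [^] i \<otimes> d [^] j = d [^] j \<otimes> x [^] i"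
    proof (induct j)
      case 0 then show ?case using xc by simp
    next
      case (Suc j)
      have "x [^] i \<otimes> d [^] Suc j = (x [^] i \<otimes> d [^] j) \<otimes> d" using xc dc by (simp add: m_assoc)
      also have "\<dots> = d [^] j \<otimes> (x [^] i \<otimes> d)" using Suc xc dc by (simp add: m_assoc)
      also have "\<dots> = d [^] Suc j \<otimes> x [^] i" using Suc xc dc by (simp add: m_assoc)
      finally show ?case .
    qed
  qed
  have key: "x [^] i \<otimes> d [^] j \<noteq> x [^] i' \<otimes> d [^] j'"
    if "i < p" "i' < p" "j < p" "j' < p" "j' < j" for i i' j j' :: nat
  proof
    assume eq: "x [^] i \<otimes> d [^] j = x [^] i' \<otimes> d [^] j'"
    define m where "m = j - j'"
    have m0: "m \<noteq> 0" "m < p" using that by (auto simp: m_def)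
    have "x [^] (p - i) \<otimes> (x [^] i \<otimes> d [^] j) = x [^] (p - i) \<otimes> (x [^] i' \<otimes> d [^] j')"
      using eq by simp
    hence "(x [^] (p - i) \<otimes> x [^] i) \<otimes> d [^] j = (x [^] (p - i) \<otimes> x [^] i') \<otimes> d [^] j'"
      using xc dc by (simp add: m_assoc)
    hence "x [^] (p - i + i) \<otimes> d [^] j = x [^] (p - i + i') \<otimes> d [^] j'"
      using xc dc by (simp add: nat_pow_mult)
    hence e1: "d [^] j = x [^] (p - i + i') \<otimes> d [^] j'"
      using xc dc that xp by simp
    have "d [^] j = d [^] m \<otimes> d [^] j'" using that dc by (simp add: m_def nat_pow_mult)
    with e1 have "d [^] m \<otimes> d [^] j' = x [^] (p - i + i') \<otimes> d [^] j'" by simp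
    hence e2: "d [^] m = x [^] (p - i + i')" using xc dc by (simp add: r_cancel)
    obtain s t where st: "m * s = p * t + gcd m p" using bezout_nat[OF m0(1)] by blast
    have "\<not> p dvd m" using m0 by (auto dest: dvd_imp_le)
    hence "coprime p m" using p by (simp add: prime_imp_coprime)
    hence "gcd m p = 1" by (simp add: coprime_commute)
    hence "d [^] (m * s) = d [^] (p * t) \<otimes> d" using st dc by (simp add: nat_pow_mult)
    moreover have "d [^] (p * t) = \<one>" using dc dp nat_pow_pow[OF dc, of p t] by (simp add: nat_pow_one)
    ultimately have "d [^] (m * s) = d" using dc by simp
    hence "d = (x [^] (p - i + i')) [^] s" using e2 nat_pow_pow[OF dc, of m s] by simp
    hence "d = x [^] ((p - i + i') * s)" using xc by (simp add: nat_pow_pow)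
    thus False using nd by blast
  qed
  define H where "H = (\<lambda>(i,j). x [^] i \<otimes> d [^] j) ` ({..<p} \<times> {..<p})"
  have inj: "inj_on (\<lambda>(i,j). x [^] i \<otimes> d [^] j) ({..<p} \<times> {..<p})"
  proof (rule inj_onI)
    fix ab ab' assume A: "ab \<in> {..<p} \<times> {..<p}" "ab' \<in> {..<p} \<times> {..<p}"
      and eq0: "(\<lambda>(i,j). x [^] i \<otimes> d [^] j) ab = (\<lambda>(i,j). x [^] i \<otimes> d [^] j) ab'"
    obtain i j where ab: "ab = (i,j)" by (cases ab)
    obtain i' j' where ab': "ab' = (i',j')" by (cases ab')
    have a: "i < p" "j < p" "i' < p" "j' < p" using A ab ab' by auto
    have eq: "x [^] i \<otimes> d [^] j = x [^] i' \<otimes> d [^] j'" using eq0 ab ab' by simp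
    have "j = j'"
    proof (rule ccontr)
      assume "j \<noteq> j'"
      hence "j' < j \<or> j < j'" by linarith
      thus False using key[of i i' j j'] key[of i' i j' j] a eq by auto
    qed
    with eq have "x [^] i = x [^] i'" using xc dc by (simp add: r_cancel)
    hence "i = i'" using ord_inj[OF xc] a ordx unfolding inj_on_def by auto
    then show "ab = ab'" using \<open>j = j'\<close> ab ab' by simp
  qed
  have cardH: "card H = p * p" unfolding H_def using card_image[OF inj] by simp
  have mulH: "(x [^] i \<otimes> d [^] j) \<otimes> (x [^] i' \<otimes> d [^] j') = x [^] ((i + i') mod p) \<otimes> d [^] ((j + j') mod p)"
    for i j i' j' :: nat
  proof -
    have "(x [^] i \<otimes> d [^] j) \<otimes> (x [^] i' \<otimes> d [^] j') = x [^] i \<otimes> (d [^] j \<otimes> x [^] i') \<otimes> d [^] j'"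
      using xc dc by (simp add: m_assoc)
    also have "\<dots> = x [^] i \<otimes> (x [^] i' \<otimes> d [^] j) \<otimes> d [^] j'" using comm' by simp
    also have "\<dots> = (x [^] i \<otimes> x [^] i') \<otimes> (d [^] j \<otimes> d [^] j')" using xc dc by (simp add: m_assoc)
    also have "\<dots> = x [^] (i + i') \<otimes> d [^] (j + j')" using xc dc by (simp add: nat_pow_mult)
    also have "\<dots> = x [^] ((i + i') mod p) \<otimes> d [^] ((j + j') mod p)"
      using pow_mod_p[OF xc xp, of "i + i'"] pow_mod_p[OF dc dp, of "j + j'"] by simp
    finally show ?thesis .
  qed
  have HK: "H \<subseteq> K"
  proof
    fix a assume "a \<in> H"
    then obtain i j where "a = x [^] (i::nat) \<otimes> d [^] (j::nat)" unfolding H_def by auto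
    thus "a \<in> K" using subgroup.m_closed[OF K] subgroup_nat_pow_closed[OF K x] subgroup_nat_pow_closed[OF K d] by simp
  qed
  have subH: "subgroup H G"
  proof (rule subgroupI)
    show "H \<subseteq> carrier G" using HK K subgroup.subset by blast
    show "H \<noteq> {}" unfolding H_def using p0 by auto
  next
    fix a assume "a \<in> H"
    then obtain i j where ij: "i < p" "j < p" "a = x [^] i \<otimes> d [^] j" unfolding H_def by auto
    have "(x [^] ((p - i) mod p) \<otimes> d [^] ((p - j) mod p)) \<otimes> a = \<one>"
      using ij mulH[of "(p - i) mod p" "(p - j) mod p" i j] xc dc
      by (simp add: mod_add_left_eq)
    hence "inv a = x [^] ((p - i) mod p) \<otimes> d [^] ((p - j) mod p)"
      using ij xc dc by (simp add: inv_equality)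
    thus "inv a \<in> H" unfolding H_def using p0 by auto
  next
    fix a b assume "a \<in> H" "b \<in> H"
    then obtain i j i' j' where "i < p" "j < p" "a = x [^] i \<otimes> d [^] j"
      "i' < p" "j' < p" "b = x [^] i' \<otimes> d [^] j'" unfolding H_def by auto
    thus "a \<otimes> b \<in> H" using mulH p0 unfolding H_def by auto
  qed
  have "subgroup H (G\<lparr>carrier := K\<rparr>)" using subgroup_incl[OF subH K HK] .
  moreover have "group (G\<lparr>carrier := K\<rparr>)" using subgroup.subgroup_is_group[OF K] is_group by blast
  ultimately have "card (rcosets\<^bsub>G\<lparr>carrier := K\<rparr>\<^esub> H) * card H = order (G\<lparr>carrier := K\<rparr>)"
    using group.lagrange by blast
  hence "card H dvd order (G\<lparr>carrier := K\<rparr>)" by (metis dvd_triv_right)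
  hence "p * p dvd card K" using cardH by (simp add: order_def)
  hence "p ^ 2 dvd card K" by (simp add: power2_eq_square)
  hence "is_unit p" using sq by (rule squarefreeD[rotated])
  thus False using p0 by simp
qed

end

lemma lc_0: "lower_central H 0 = carrier H"
  by (simp add: lower_central_def)

lemma lc_Suc: "lower_central H (Suc n) = generate H (commutator_set H (lower_central H n) (carrier H))"
  by (simp add: lower_central_def)

context group
begin

lemma pow_commute:
  assumes ac: "a \<in> carrier G" and bc: "b \<in> carrier G" and comm: "a \<otimes> b = b \<otimes> a"
  shows "a [^] (i::nat) \<otimes> b [^] (j::nat) = b [^] j \<otimes> a [^] i"
proof -
  have "a [^] i \<otimes> b = b \<otimes> a [^] i"
  proof (induct i)
    case 0 then show ?case using bc by simp
  next
    case (Suc i)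
    have "a [^] Suc i \<otimes> b = a [^] i \<otimes> (a \<otimes> b)" using ac bc by (simp add: m_assoc)
    also have "\<dots> = (a [^] i \<otimes> b) \<otimes> a" using ac bc comm by (simp add: m_assoc)
    also have "\<dots> = b \<otimes> a [^] Suc i" using Suc ac bc by (simp add: m_assoc)
    finally show ?case .
  qed
  then show ?thesis
  proof (induct j)
    case 0 then show ?case using ac by simp
  next
    case (Suc j)
    have "a [^] i \<otimes> b [^] Suc j = (a [^] i \<otimes> b [^] j) \<otimes> b" using ac bc by (simp add: m_assoc)
    also have "\<dots> = b [^] j \<otimes> (a [^] i \<otimes> b)" using Suc ac bc by (simp add: m_assoc)
    also have "\<dots> = b [^] Suc j \<otimes> a [^] i" using Suc ac bc by (simp add: m_assoc)
    finally show ?case .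
  qed
qed

lemma conj_pow:
  assumes ac: "a \<in> carrier G" and bc: "b \<in> carrier G"
    and c: "c = a \<otimes> b \<otimes> inv a \<otimes> inv b" and ca: "c \<otimes> a = a \<otimes> c"
  shows "a [^] (k::nat) \<otimes> b \<otimes> inv (a [^] k) = c [^] k \<otimes> b"
proof (induct k)
  case 0 then show ?case using bc by simp
next
  case (Suc k)
  have cc: "c \<in> carrier G" using c ac bc by simp
  have cb: "c \<otimes> b = a \<otimes> b \<otimes> inv a" using c ac bc by (simp add: m_assoc)
  have ack: "a \<otimes> c [^] k = c [^] k \<otimes> a"
    using pow_commute[OF ac cc ca[symmetric], of 1 k] ac by simp
  have e: "a [^] Suc k = a \<otimes> a [^] k" using nat_pow_Suc2[OF ac] .
  have "a [^] Suc k \<otimes> b \<otimes> inv (a [^] Suc k) = (a \<otimes> a [^] k) \<otimes> b \<otimes> inv (a \<otimes> a [^] k)"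
    by (simp only: e)
  also have "\<dots> = a \<otimes> (a [^] k \<otimes> b \<otimes> inv (a [^] k)) \<otimes> inv a"
    using ac bc by (simp add: inv_mult_group m_assoc)
  also have "\<dots> = (a \<otimes> c [^] k) \<otimes> b \<otimes> inv a" using Suc ac bc cc by (simp add: m_assoc)
  also have "\<dots> = c [^] k \<otimes> (a \<otimes> b \<otimes> inv a)" using ack ac bc cc by (simp add: m_assoc)
  also have "\<dots> = c [^] k \<otimes> (c \<otimes> b)" using cb by simp
  also have "\<dots> = c [^] Suc k \<otimes> b" using cc bc by (simp add: m_assoc)
  finally show ?case .
qed

lemma comm_central_trivial:
  assumes K: "subgroup K G" and fin: "finite K" and sq: "squarefree (card K)"
    and a: "a \<in> K" and b: "b \<in> K" and c: "c = a \<otimes> b \<otimes> inv a \<otimes> inv b"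
    and ca: "c \<otimes> a = a \<otimes> c" and cb: "c \<otimes> b = b \<otimes> c"
  shows "c = \<one>"
proof (rule ccontr)
  assume c1: "c \<noteq> \<one>"
  have ac: "a \<in> carrier G" and bc: "b \<in> carrier G" using a b subgroup.mem_carrier[OF K] by auto
  have cK: "c \<in> K" using c a b K by (simp add: subgroup.m_closed subgroup.m_inv_closed)
  have cc: "c \<in> carrier G" using c ac bc by simp
  define NK where "NK = card K"
  have NK0: "NK > 0" using fin a NK_def card_gt_0_iff by auto
  have grpK: "group (G\<lparr>carrier := K\<rparr>)" using subgroup.subgroup_is_group[OF K] is_group by blast
  have "a [^]\<^bsub>G\<lparr>carrier := K\<rparr>\<^esub> order (G\<lparr>carrier := K\<rparr>) = \<one>\<^bsub>G\<lparr>carrier := K\<rparr>\<^esub>"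
    using group.pow_order_eq_1[OF grpK] a by simp
  hence aN: "a [^] NK = \<one>" using nat_pow_consistent[of a NK K] by (simp add: order_def NK_def)
  have "a [^] NK \<otimes> b \<otimes> inv (a [^] NK) = c [^] NK \<otimes> b" using conj_pow[OF ac bc c ca] .
  hence "b = c [^] NK \<otimes> b" using aN bc by simp
  hence cN: "c [^] NK = \<one>" using bc cc by (metis l_one r_cancel nat_pow_closed one_closed)
  define e where "e = ord c"
  have edvd: "e dvd NK" using cN pow_eq_id[OF cc] e_def by simp
  have e1: "e \<noteq> 1" using ord_eq_1[OF cc] c1 e_def by simp
  obtain p where p: "Factorial_Ring.prime p" "p dvd e" using prime_factor_nat[OF e1] by blast
  have pN: "p dvd NK" using p(2) edvd by (rule dvd_trans)
  define k where "k = NK div p"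
  have Nk: "NK = k * p" using pN k_def by simp
  have pk: "\<not> p dvd k"
  proof
    assume "p dvd k"
    hence "p ^ 2 dvd NK" using Nk by (auto simp: power2_eq_square)
    hence "is_unit p" using sq NK_def squarefreeD by blast
    thus False using p by simp
  qed
  define x where "x = a [^] k"
  define d where "d = c [^] k"
  have xc: "x \<in> carrier G" and dc: "d \<in> carrier G" using x_def d_def ac cc by auto
  have xK: "x \<in> K" and dK: "d \<in> K" using x_def d_def subgroup_nat_pow_closed[OF K] a cK by auto
  have d1: "d \<noteq> \<one>"
  proof
    assume "d = \<one>"
    hence "e dvd k" using pow_eq_id[OF cc] d_def e_def by simp
    thus False using p pk dvd_trans by blast
  qed
  have xp: "x [^] p = \<one>" using x_def aN Nk nat_pow_pow[OF ac] by simp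
  have dp: "d [^] p = \<one>" using d_def cN Nk nat_pow_pow[OF cc] by simp
  have xbd: "x \<otimes> b \<otimes> inv x = d \<otimes> b" using conj_pow[OF ac bc c ca, of k] x_def d_def by simp
  have x1: "x \<noteq> \<one>"
  proof
    assume "x = \<one>"
    hence "b = d \<otimes> b" using xbd bc by simp
    hence "d = \<one>" using bc dc by (metis l_one r_cancel one_closed)
    thus False using d1 by simp
  qed
  have xd: "x \<otimes> d = d \<otimes> x" using pow_commute[OF ac cc ca[symmetric]] x_def d_def by simp
  obtain i where di: "d = x [^] (i::nat)"
    using sqf_two_gen[OF K sq fin xK dK xd p(1) xp dp x1] by blast
  have dxdef: "d = x \<otimes> b \<otimes> inv x \<otimes> inv b" using xbd bc dc xc by (simp add: m_assoc)
  have dx: "d \<otimes> x = x \<otimes> d" using xd by simp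
  have "x [^] i \<otimes> b \<otimes> inv (x [^] i) = d [^] i \<otimes> b" using conj_pow[OF xc bc dxdef dx] .
  moreover have db: "d \<otimes> b = b \<otimes> d" using pow_commute[OF cc bc cb, of k 1] d_def bc by simp
  ultimately have "b = d [^] i \<otimes> b" using di bc dc by (simp add: m_assoc)
  hence "d [^] i = \<one>" using bc dc by (metis l_one r_cancel nat_pow_closed one_closed)
  hence "ord d dvd i" using pow_eq_id[OF dc] by simp
  moreover have "ord d dvd p" using dp pow_eq_id[OF dc] by simp
  moreover have "ord d \<noteq> 1" using ord_eq_1[OF dc] d1 by simp
  ultimately have "p dvd i" using p(1) unfolding prime_nat_iff by metis
  then obtain q where "i = p * q" by blast
  hence "x [^] i = \<one>" using xp nat_pow_pow[OF xc, of p q] by simp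
  thus False using di d1 by simp
qed

lemma centralizer_subgroup:
  assumes "T \<subseteq> carrier G"
  shows "subgroup {x \<in> carrier G. \<forall>y\<in>T. x \<otimes> y = y \<otimes> x} G"
proof (rule subgroupI)
  show "{x \<in> carrier G. \<forall>y\<in>T. x \<otimes> y = y \<otimes> x} \<subseteq> carrier G" by auto
  have "\<one> \<in> {x \<in> carrier G. \<forall>y\<in>T. x \<otimes> y = y \<otimes> x}" using assms by auto
  then show "{x \<in> carrier G. \<forall>y\<in>T. x \<otimes> y = y \<otimes> x} \<noteq> {}" by blast
next
  fix a assume a: "a \<in> {x \<in> carrier G. \<forall>y\<in>T. x \<otimes> y = y \<otimes> x}"
  have "\<forall>y\<in>T. inv a \<otimes> y = y \<otimes> inv a"
  proof
    fix y assume y: "y \<in> T"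
    have yc: "y \<in> carrier G" using y assms by auto
    have ac: "a \<in> carrier G" using a by simp
    have "inv a \<otimes> y = inv a \<otimes> (y \<otimes> a) \<otimes> inv a" using ac yc by (simp add: m_assoc)
    also have "\<dots> = inv a \<otimes> (a \<otimes> y) \<otimes> inv a" using a y by simp
    also have "\<dots> = y \<otimes> inv a" using ac yc by (simp add: m_assoc[symmetric])
    finally show "inv a \<otimes> y = y \<otimes> inv a" .
  qed
  then show "inv a \<in> {x \<in> carrier G. \<forall>y\<in>T. x \<otimes> y = y \<otimes> x}" using a by simp
next
  fix a b assume a: "a \<in> {x \<in> carrier G. \<forall>y\<in>T. x \<otimes> y = y \<otimes> x}"
    and b: "b \<in> {x \<in> carrier G. \<forall>y\<in>T. x \<otimes> y = y \<otimes> x}"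
  have "\<forall>y\<in>T. a \<otimes> b \<otimes> y = y \<otimes> (a \<otimes> b)"
  proof
    fix y assume y: "y \<in> T"
    have yc: "y \<in> carrier G" using y assms by auto
    have "a \<otimes> b \<otimes> y = a \<otimes> (y \<otimes> b)" using a b y yc by (simp add: m_assoc)
    also have "\<dots> = (a \<otimes> y) \<otimes> b" using a b yc by (simp add: m_assoc)
    also have "\<dots> = y \<otimes> (a \<otimes> b)" using a b y yc by (simp add: m_assoc)
    finally show "a \<otimes> b \<otimes> y = y \<otimes> (a \<otimes> b)" .
  qed
  then show "a \<otimes> b \<in> {x \<in> carrier G. \<forall>y\<in>T. x \<otimes> y = y \<otimes> x}" using a b by simp
qed

lemma generate_commute:
  assumes S: "S \<subseteq> carrier G" and comm: "\<And>x y. x \<in> S \<Longrightarrow> y \<in> S \<Longrightarrow> x \<otimes> y = y \<otimes> x"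
    and x: "x \<in> generate G S" and y: "y \<in> generate G S"
  shows "x \<otimes> y = y \<otimes> x"
proof -
  have "generate G S \<subseteq> {x \<in> carrier G. \<forall>y\<in>S. x \<otimes> y = y \<otimes> x}"
    by (rule generate_subgroup_incl[OF _ centralizer_subgroup[OF S]]) (use S comm in auto)
  hence "S \<subseteq> {x \<in> carrier G. \<forall>y\<in>generate G S. x \<otimes> y = y \<otimes> x}" using S by auto
  hence "generate G S \<subseteq> {x \<in> carrier G. \<forall>y\<in>generate G S. x \<otimes> y = y \<otimes> x}"
    by (rule generate_subgroup_incl[OF _ centralizer_subgroup[OF generate_incl[OF S]]])
  thus ?thesis using x y by auto
qed

end

context group
begin

lemma comm_one:
  assumes "x \<in> carrier G" "y \<in> carrier G" "x \<otimes> y \<otimes> inv x \<otimes> inv y = \<one>"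
  shows "x \<otimes> y = y \<otimes> x"
proof -
  have "x \<otimes> y = x \<otimes> y \<otimes> inv x \<otimes> inv y \<otimes> y \<otimes> x" using assms(1,2) by (simp add: m_assoc)
  also have "\<dots> = y \<otimes> x" using assms by simp
  finally show ?thesis .
qed

lemma nilpotent_class2:
  assumes N: "subgroup N G" and Z: "subgroup Z G"
    and cs: "\<And>a b. a \<in> N \<Longrightarrow> b \<in> N \<Longrightarrow> a \<otimes> b \<otimes> inv a \<otimes> inv b \<in> Z"
    and zc: "\<And>z b. z \<in> Z \<Longrightarrow> b \<in> N \<Longrightarrow> z \<otimes> b = b \<otimes> z"
  shows "nilpotent_grp (G\<lparr>carrier := N\<rparr>)"
proof -
  let ?H = "G\<lparr>carrier := N\<rparr>"
  have grp: "group ?H" using subgroup.subgroup_is_group[OF N is_group] .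
  have invH: "\<And>x. x \<in> N \<Longrightarrow> inv\<^bsub>?H\<^esub> x = inv x" using m_inv_consistent[OF N] by simp
  have Nc: "\<And>x. x \<in> N \<Longrightarrow> x \<in> carrier G" using subgroup.mem_carrier[OF N] .
  have ZN: "subgroup (Z \<inter> N) ?H" using subgroup_incl[OF subgroups_Inter_pair[OF Z N] N] by blast
  have cs1: "commutator_set ?H (carrier ?H) (carrier ?H) \<subseteq> Z \<inter> N"
  proof
    fix c assume "c \<in> commutator_set ?H (carrier ?H) (carrier ?H)"
    then obtain a b where ab: "a \<in> N" "b \<in> N" "c = a \<otimes> b \<otimes> inv\<^bsub>?H\<^esub> a \<otimes> inv\<^bsub>?H\<^esub> b"
      unfolding commutator_set_def by auto
    hence c: "c = a \<otimes> b \<otimes> inv a \<otimes> inv b" using invH by simp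
    have "c \<in> Z" using cs[OF ab(1,2)] c by simp
    moreover have "c \<in> N" using c ab N by (simp add: subgroup.m_closed subgroup.m_inv_closed)
    ultimately show "c \<in> Z \<inter> N" by simp
  qed
  have L1: "lower_central ?H 1 \<subseteq> Z \<inter> N"
    using group.generate_subgroup_incl[OF grp cs1 ZN] by (simp add: lower_central_def)
  have cs2: "commutator_set ?H (lower_central ?H 1) (carrier ?H) \<subseteq> {\<one>\<^bsub>?H\<^esub>}"
  proof
    fix c assume "c \<in> commutator_set ?H (lower_central ?H 1) (carrier ?H)"
    then obtain a b where ab: "a \<in> lower_central ?H 1" "b \<in> N" "c = a \<otimes> b \<otimes> inv\<^bsub>?H\<^esub> a \<otimes> inv\<^bsub>?H\<^esub> b"
      unfolding commutator_set_def by auto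
    have aZ: "a \<in> Z" "a \<in> N" using ab(1) L1 by auto
    hence c: "c = a \<otimes> b \<otimes> inv a \<otimes> inv b" using invH ab by simp
    have "a \<otimes> b = b \<otimes> a" using zc aZ ab by simp
    hence "c = b \<otimes> a \<otimes> inv a \<otimes> inv b" using c by simp
    also have "\<dots> = \<one>" using Nc aZ ab by (simp add: m_assoc)
    finally show "c \<in> {\<one>\<^bsub>?H\<^esub>}" by simp
  qed
  have "lower_central ?H 2 \<subseteq> {\<one>\<^bsub>?H\<^esub>}"
    using group.generate_subgroup_incl[OF grp cs2 group.triv_subgroup[OF grp]]
    by (simp add: lc_Suc[of ?H 1, simplified] numeral_2_eq_2)
  moreover have "\<one>\<^bsub>?H\<^esub> \<in> lower_central ?H 2"
    using generate.one[of ?H "commutator_set ?H (lower_central ?H 1) (carrier ?H)"]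
    by (simp add: lc_Suc[of ?H 1, simplified] numeral_2_eq_2)
  ultimately have "lower_central ?H 2 = {\<one>\<^bsub>?H\<^esub>}" by blast
  thus ?thesis unfolding nilpotent_grp_def using grp by blast
qed

lemma Fitting_normal: "Fitting G \<lhd> G"
  unfolding Fitting_def
proof (rule normal_generateI)
  show "\<Union>{N. N \<lhd> G \<and> nilpotent_grp (G\<lparr>carrier := N\<rparr>)} \<subseteq> carrier G"
    using normal_imp_subgroup subgroup.subset by blast
next
  fix h g assume h: "h \<in> \<Union>{N. N \<lhd> G \<and> nilpotent_grp (G\<lparr>carrier := N\<rparr>)}" and g: "g \<in> carrier G"
  then obtain N where N: "N \<lhd> G" "nilpotent_grp (G\<lparr>carrier := N\<rparr>)" "h \<in> N" by blast
  have "g \<otimes> h \<otimes> inv g \<in> N" using normal.inv_op_closed2[OF N(1) g N(3)] .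
  thus "g \<otimes> h \<otimes> inv g \<in> \<Union>{N. N \<lhd> G \<and> nilpotent_grp (G\<lparr>carrier := N\<rparr>)}" using N by blast
qed

lemma Fitting_subgroup: "subgroup (Fitting G) G"
  using normal_imp_subgroup[OF Fitting_normal] .

lemma Fitting_incl:
  assumes "N \<lhd> G" "nilpotent_grp (G\<lparr>carrier := N\<rparr>)"
  shows "N \<subseteq> Fitting G"
  unfolding Fitting_def using assms by (blast intro: generate.incl)

lemma nilpotent_abelian:
  assumes K: "subgroup K G" and finK: "finite K" and sq: "squarefree (card K)"
    and N: "subgroup N G" and NK: "N \<subseteq> K" and nil: "nilpotent_grp (G\<lparr>carrier := N\<rparr>)"
    and a: "a \<in> N" and b: "b \<in> N"
  shows "a \<otimes> b = b \<otimes> a"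
proof -
  let ?H = "G\<lparr>carrier := N\<rparr>"
  have grp: "group ?H" using subgroup.subgroup_is_group[OF N is_group] .
  have invH: "\<And>x. x \<in> N \<Longrightarrow> inv\<^bsub>?H\<^esub> x = inv x" using m_inv_consistent[OF N] by simp
  have Nc: "\<And>x. x \<in> N \<Longrightarrow> x \<in> carrier G" using subgroup.mem_carrier[OF N] .
  obtain n where lcn: "lower_central ?H n = {\<one>\<^bsub>?H\<^esub>}" using nil unfolding nilpotent_grp_def by blast
  define Cent where "Cent = {z \<in> N. \<forall>b\<in>N. z \<otimes> b = b \<otimes> z}"
  have lcN: "lower_central ?H j \<subseteq> N" for j
  proof (induct j)
    case 0 then show ?case by (simp add: lc_0)
  next
    case (Suc j)
    have "commutator_set ?H (lower_central ?H j) (carrier ?H) \<subseteq> carrier ?H"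
    proof
      fix c assume "c \<in> commutator_set ?H (lower_central ?H j) (carrier ?H)"
      then obtain x y where "x \<in> lower_central ?H j" "y \<in> N" "c = x \<otimes> y \<otimes> inv\<^bsub>?H\<^esub> x \<otimes> inv\<^bsub>?H\<^esub> y"
        unfolding commutator_set_def by auto
      then show "c \<in> carrier ?H" using Suc invH N by (auto simp: subgroup.m_closed subgroup.m_inv_closed)
    qed
    then show ?case using group.generate_incl[OF grp] by (simp add: lc_Suc)
  qed
  have step: "lower_central ?H j \<subseteq> Cent" if hyp: "lower_central ?H (Suc j) \<subseteq> Cent" for j
  proof
    fix x assume x: "x \<in> lower_central ?H j"
    have xN: "x \<in> N" using x lcN by auto
    have "\<forall>y\<in>N. x \<otimes> y = y \<otimes> x"
    proof
      fix y assume yN: "y \<in> N"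
      define c where "c = x \<otimes> y \<otimes> inv x \<otimes> inv y"
      have "c = x \<otimes>\<^bsub>?H\<^esub> y \<otimes>\<^bsub>?H\<^esub> inv\<^bsub>?H\<^esub> x \<otimes>\<^bsub>?H\<^esub> inv\<^bsub>?H\<^esub> y"
        using invH xN yN c_def by simp
      hence "c \<in> commutator_set ?H (lower_central ?H j) (carrier ?H)"
        unfolding commutator_set_def using x yN by auto
      hence "c \<in> lower_central ?H (Suc j)" by (simp add: lc_Suc generate.incl)
      hence cC: "c \<in> Cent" using hyp by auto
      have "c = \<one>"
        using comm_central_trivial[OF K finK sq, of x y c] xN yN NK cC c_def unfolding Cent_def by auto
      thus "x \<otimes> y = y \<otimes> x" using comm_one[of x y] Nc xN yN c_def by simp
    qed
    thus "x \<in> Cent" using xN Cent_def by simp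
  qed
  have down: "lower_central ?H (n - m) \<subseteq> Cent" for m
  proof (induct m)
    case 0
    have "\<one> \<in> Cent" using Cent_def N Nc subgroup.one_closed by fastforce
    then show ?case using lcn by simp
  next
    case (Suc m)
    show ?case
    proof (cases "m < n")
      case True
      hence "n - m = Suc (n - Suc m)" by simp
      then show ?thesis using step Suc by metis
    next
      case False
      hence "n - Suc m = n - m" by simp
      then show ?thesis using Suc by simp
    qed
  qed
  have "N \<subseteq> Cent" using down[of n] by (simp add: lc_0)
  thus ?thesis using a b Cent_def by auto
qed

lemma Fitting_abelian:
  assumes fin: "finite (carrier G)" and sq: "squarefree (card (Fitting G))"
    and x: "x \<in> Fitting G" and y: "y \<in> Fitting G"
  shows "x \<otimes> y = y \<otimes> x"
proof -
  define S where "S = \<Union>{N. N \<lhd> G \<and> nilpotent_grp (G\<lparr>carrier := N\<rparr>)}"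
  have FS: "Fitting G = generate G S" unfolding Fitting_def S_def ..
  have K: "subgroup (Fitting G) G" by (rule Fitting_subgroup)
  have finK: "finite (Fitting G)" using fin subgroup.subset[OF K] finite_subset by blast
  have S: "S \<subseteq> carrier G" unfolding S_def using normal_imp_subgroup subgroup.subset by blast
  have comm: "a \<otimes> b = b \<otimes> a" if a: "a \<in> S" and b: "b \<in> S" for a b
  proof -
    obtain N1 where N1: "N1 \<lhd> G" "nilpotent_grp (G\<lparr>carrier := N1\<rparr>)" "a \<in> N1" using a S_def by blast
    obtain N2 where N2: "N2 \<lhd> G" "nilpotent_grp (G\<lparr>carrier := N2\<rparr>)" "b \<in> N2" using b S_def by blast
    have N1K: "N1 \<subseteq> Fitting G" using Fitting_incl N1 by blast
    have N2K: "N2 \<subseteq> Fitting G" using Fitting_incl N2 by blast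
    have s1: "subgroup N1 G" "subgroup N2 G" using N1 N2 normal_imp_subgroup by auto
    have ac: "a \<in> carrier G" and bc: "b \<in> carrier G" using N1 N2 s1 subgroup.mem_carrier by metis+
    define c where "c = a \<otimes> b \<otimes> inv a \<otimes> inv b"
    have inva: "inv a \<in> N1" using subgroup.m_inv_closed[OF s1(1) N1(3)] .
    have bab: "b \<otimes> inv a \<otimes> inv b \<in> N1" using normal.inv_op_closed2[OF N1(1) bc inva] .
    have "c = a \<otimes> (b \<otimes> inv a \<otimes> inv b)" using ac bc by (simp add: c_def m_assoc)
    hence cN1: "c \<in> N1" using subgroup.m_closed[OF s1(1) N1(3) bab] by simp
    have "a \<otimes> b \<otimes> inv a \<in> N2" using normal.inv_op_closed2[OF N2(1) ac N2(3)] .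
    hence cN2: "c \<in> N2" using c_def subgroup.m_closed[OF s1(2)] subgroup.m_inv_closed[OF s1(2) N2(3)] by simp
    have ca: "c \<otimes> a = a \<otimes> c" using nilpotent_abelian[OF K finK sq s1(1) N1K N1(2) cN1 N1(3)] .
    have cb: "c \<otimes> b = b \<otimes> c" using nilpotent_abelian[OF K finK sq s1(2) N2K N2(2) cN2 N2(3)] .
    have "c = \<one>" using comm_central_trivial[OF K finK sq _ _ c_def ca cb] N1(3) N2(3) N1K N2K by auto
    thus ?thesis using comm_one[OF ac bc] c_def by simp
  qed
  show ?thesis using generate_commute[OF S comm] x y FS by simp
qed

end

context group
begin

lemma cancel_inv1 [simp]: "g \<in> carrier G \<Longrightarrow> z \<in> carrier G \<Longrightarrow> g \<otimes> (inv g \<otimes> z) = z"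
  by (simp add: m_assoc[symmetric])

lemma cancel_inv2 [simp]: "g \<in> carrier G \<Longrightarrow> z \<in> carrier G \<Longrightarrow> inv g \<otimes> (g \<otimes> z) = z"
  by (simp add: m_assoc[symmetric])

lemma conj_hom:
  assumes g: "g \<in> carrier G"
  shows "(\<lambda>x. g \<otimes> x \<otimes> inv g) \<in> hom G G"
proof (rule homI)
  fix x assume "x \<in> carrier G" then show "g \<otimes> x \<otimes> inv g \<in> carrier G" using g by simp
next
  fix x y assume x: "x \<in> carrier G" and y: "y \<in> carrier G"
  have "g \<otimes> x \<otimes> inv g \<otimes> (g \<otimes> y \<otimes> inv g) = g \<otimes> x \<otimes> (inv g \<otimes> g) \<otimes> (y \<otimes> inv g)"
    using g x y by (simp only: m_assoc inv_closed m_closed)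
  also have "\<dots> = g \<otimes> (x \<otimes> y) \<otimes> inv g" using g x y by (simp add: m_assoc)
  finally show "g \<otimes> (x \<otimes> y) \<otimes> inv g = g \<otimes> x \<otimes> inv g \<otimes> (g \<otimes> y \<otimes> inv g)" by simp
qed

lemma conj_int_pow:
  assumes g: "g \<in> carrier G" and x: "x \<in> carrier G"
  shows "g \<otimes> x [^] (k::int) \<otimes> inv g = (g \<otimes> x \<otimes> inv g) [^] k"
  using hom_int_pow[OF conj_hom[OF g] x is_group is_group] .

lemma conj_nat_pow:
  assumes g: "g \<in> carrier G" and x: "x \<in> carrier G"
  shows "g \<otimes> x [^] (k::nat) \<otimes> inv g = (g \<otimes> x \<otimes> inv g) [^] k"
  using hom_nat_pow[OF conj_hom[OF g] x is_group is_group] .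

lemma Fitting_selfcentralizing:
  assumes sol: "solvable G"
  shows "{x \<in> carrier G. \<forall>f\<in>Fitting G. x \<otimes> f = f \<otimes> x} \<subseteq> Fitting G"
proof (rule ccontr)
  let ?F = "Fitting G"
  define C where "C = {x \<in> carrier G. \<forall>f\<in>?F. x \<otimes> f = f \<otimes> x}"
  assume nC: "\<not> {x \<in> carrier G. \<forall>f\<in>Fitting G. x \<otimes> f = f \<otimes> x} \<subseteq> Fitting G"
  hence nCF: "\<not> C \<subseteq> ?F" unfolding C_def .
  have Fn: "?F \<lhd> G" by (rule Fitting_normal)
  have Fs: "subgroup ?F G" by (rule Fitting_subgroup)
  have Fc: "?F \<subseteq> carrier G" using subgroup.subset[OF Fs] .
  have Cs: "subgroup C G" unfolding C_def by (rule centralizer_subgroup[OF Fc])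
  have Cn: "C \<lhd> G"
  proof -
    have "g \<otimes> x \<otimes> inv g \<in> C" if g: "g \<in> carrier G" and x: "x \<in> C" for g x
    proof -
      have xc: "x \<in> carrier G" using x C_def by simp
      have "\<forall>f\<in>?F. (g \<otimes> x \<otimes> inv g) \<otimes> f = f \<otimes> (g \<otimes> x \<otimes> inv g)"
      proof
        fix f assume f: "f \<in> ?F"
        have fc: "f \<in> carrier G" using f Fc by auto
        have f': "inv g \<otimes> f \<otimes> g \<in> ?F" using normal.inv_op_closed1[OF Fn g f] .
        have f'c: "inv g \<otimes> f \<otimes> g \<in> carrier G" using g fc by simp
        have com: "x \<otimes> (inv g \<otimes> f \<otimes> g) = (inv g \<otimes> f \<otimes> g) \<otimes> x" using x f' C_def by simp
        have "(g \<otimes> x \<otimes> inv g) \<otimes> f = g \<otimes> (x \<otimes> (inv g \<otimes> f \<otimes> g)) \<otimes> inv g"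
          using g xc fc by (simp add: m_assoc)
        also have "\<dots> = g \<otimes> ((inv g \<otimes> f \<otimes> g) \<otimes> x) \<otimes> inv g" using com by simp
        also have "\<dots> = f \<otimes> (g \<otimes> x \<otimes> inv g)" using g xc fc by (simp add: m_assoc)
        finally show "(g \<otimes> x \<otimes> inv g) \<otimes> f = f \<otimes> (g \<otimes> x \<otimes> inv g)" .
      qed
      thus ?thesis using g xc C_def by simp
    qed
    thus ?thesis using normal_inv_iff Cs by blast
  qed
  define D where "D i = (derived G ^^ i) (carrier G)" for i
  have Dn: "D i \<lhd> G" for i
  proof (induct i)
    case 0 then show ?case using D_def normal_self by simp
  next
    case (Suc i) then show ?case using derived_is_normal D_def by simp
  qed
  define XC where "XC i = D i \<inter> C" for i
  have Xn: "XC i \<lhd> G" for i using normal_subgroup_intersect[OF Dn Cn] XC_def by simp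
  obtain n where Dtriv: "D n = {\<one>}" using sol solvable_iff_trivial_derived_seq D_def by blast
  have XCnF: "XC n \<subseteq> ?F" using Dtriv XC_def subgroup.one_closed[OF Fs] by auto
  define j where "j = (LEAST j. XC j \<subseteq> ?F)"
  have jF: "XC j \<subseteq> ?F" using LeastI[of "\<lambda>j. XC j \<subseteq> ?F", OF XCnF] j_def by simp
  have X0: "XC 0 = C" using XC_def D_def subgroup.subset[OF Cs] by auto
  have j0: "j \<noteq> 0" using jF X0 nCF by auto
  then obtain i where ji: "j = Suc i" by (cases j) auto
  have XiF: "\<not> XC i \<subseteq> ?F" using not_less_Least[of i "\<lambda>j. XC j \<subseteq> ?F"] j_def ji by auto
  have Xs: "subgroup (XC i) G" using normal_imp_subgroup[OF Xn] .
  have nil: "nilpotent_grp (G\<lparr>carrier := XC i\<rparr>)"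
  proof (rule nilpotent_class2[OF Xs Fs])
    fix a b assume a: "a \<in> XC i" and b: "b \<in> XC i"
    have "a \<otimes> b \<otimes> inv a \<otimes> inv b \<in> derived_set G (D i)" using a b XC_def by blast
    hence "a \<otimes> b \<otimes> inv a \<otimes> inv b \<in> derived G (D i)" unfolding derived_def by (rule generate.incl)
    hence d: "a \<otimes> b \<otimes> inv a \<otimes> inv b \<in> D (Suc i)" using D_def by simp
    have "a \<otimes> b \<otimes> inv a \<otimes> inv b \<in> C" using a b XC_def Cs
      by (simp add: subgroup.m_closed subgroup.m_inv_closed)
    hence "a \<otimes> b \<otimes> inv a \<otimes> inv b \<in> XC j" using d XC_def ji by simp
    thus "a \<otimes> b \<otimes> inv a \<otimes> inv b \<in> ?F" using jF by auto
  next
    fix z b assume z: "z \<in> ?F" and b: "b \<in> XC i"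
    thus "z \<otimes> b = b \<otimes> z" using XC_def C_def by auto
  qed
  have "XC i \<subseteq> ?F" using Fitting_incl[OF Xn nil] .
  thus False using XiF by simp
qed

lemma Fitting_power_map:
  assumes fin: "finite (carrier G)" and sq: "squarefree (card (Fitting G))"
    and g: "g \<in> carrier G" and f: "f \<in> Fitting G"
  shows "\<exists>k::int. g \<otimes> f \<otimes> inv g = f [^] k"
proof -
  let ?F = "Fitting G"
  have Fs: "subgroup ?F G" by (rule Fitting_subgroup)
  have finF: "finite ?F" using fin subgroup.subset[OF Fs] finite_subset by blast
  have fc: "f \<in> carrier G" using f subgroup.mem_carrier[OF Fs] by simp
  define y where "y = g \<otimes> f \<otimes> inv g"
  have yF: "y \<in> ?F" using normal.inv_op_closed2[OF Fitting_normal g f] y_def by simp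
  have yc: "y \<in> carrier G" using y_def g fc by simp
  have ypow: "y [^] (n::nat) = g \<otimes> f [^] n \<otimes> inv g" for n using conj_nat_pow[OF g fc] y_def by simp
  define d where "d = ord f"
  have grpF: "group (G\<lparr>carrier := ?F\<rparr>)" using subgroup.subgroup_is_group[OF Fs] is_group by blast
  have "f [^]\<^bsub>G\<lparr>carrier := ?F\<rparr>\<^esub> order (G\<lparr>carrier := ?F\<rparr>) = \<one>\<^bsub>G\<lparr>carrier := ?F\<rparr>\<^esub>"
    using group.pow_order_eq_1[OF grpF] f by simp
  hence "f [^] card ?F = \<one>" using nat_pow_consistent[of f "card ?F" ?F] by (simp add: order_def)
  hence ddvd: "d dvd card ?F" using pow_eq_id[OF fc] d_def by simp
  have sqd: "squarefree d" using squarefree_mono[OF ddvd sq] .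
  have d0: "d > 0" using ord_ge_1[OF fin fc] d_def by simp
  have fd: "f [^] d = \<one>" using d_def fc by simp
  have yd: "y [^] d = \<one>" using ypow[of d] fd g by simp
  define P where "P e \<longleftrightarrow> (\<exists>i::int. y [^] (int e) = f [^] i)" for e
  have Pd: "P d" using yd P_def by (metis int_pow_0 int_pow_int)
  have Pmod: "P (a mod b)" if Pa: "P a" and Pb: "P b" for a b
  proof -
    obtain i :: int where i: "y [^] (int a) = f [^] i" using Pa unfolding P_def by blast
    obtain j :: int where j: "y [^] (int b) = f [^] j" using Pb unfolding P_def by blast
    have "y [^] (int a) = y [^] (int b * int (a div b) + int (a mod b))"
      by (metis of_nat_add of_nat_mult div_mult_mod_eq mult.commute)
    also have "\<dots> = (y [^] (int b)) [^] (int (a div b)) \<otimes> y [^] (int (a mod b))"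
      using yc by (simp add: int_pow_mult int_pow_pow)
    finally have "f [^] i = (f [^] j) [^] (int (a div b)) \<otimes> y [^] (int (a mod b))" using i j by simp
    hence "f [^] i = f [^] (j * int (a div b)) \<otimes> y [^] (int (a mod b))" using fc by (simp add: int_pow_pow)
    hence "inv (f [^] (j * int (a div b))) \<otimes> f [^] i = y [^] (int (a mod b))"
      using fc yc by (simp add: m_assoc[symmetric])
    hence "y [^] (int (a mod b)) = f [^] (- (j * int (a div b))) \<otimes> f [^] i" using fc by (simp add: int_pow_neg)
    also have "\<dots> = f [^] (- (j * int (a div b)) + i)" using int_pow_mult[OF fc, of "- (j * int (a div b))" i] by simp
    finally show ?thesis using P_def by blast
  qed
  define e where "e = (LEAST e. 0 < e \<and> P e)"
  have eP: "0 < e \<and> P e" using LeastI[of "\<lambda>e. 0 < e \<and> P e" d] d0 Pd e_def by blast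
  have edvd: "e dvd a" if "P a" for a
  proof (rule ccontr)
    assume "\<not> e dvd a"
    hence "0 < a mod e" by (simp add: mod_greater_zero_iff_not_dvd)
    moreover have "P (a mod e)" using Pmod that eP by blast
    moreover have "a mod e < e" using eP by simp
    ultimately show False using not_less_Least[of "a mod e" "\<lambda>e. 0 < e \<and> P e"] e_def by blast
  qed
  have Pp: "P (d div p)" if p: "Factorial_Ring.prime p" "p dvd d" for p
  proof -
    define k where "k = d div p"
    have dk: "d = k * p" using p k_def by simp
    define x where "x = f [^] k"
    define z where "z = y [^] k"
    have xF: "x \<in> ?F" using x_def subgroup_nat_pow_closed[OF Fs f] by simp
    have zF: "z \<in> ?F" using z_def subgroup_nat_pow_closed[OF Fs yF] by simp
    have xz: "x \<otimes> z = z \<otimes> x" using Fitting_abelian[OF fin sq xF zF] .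
    have xp: "x [^] p = \<one>" using x_def fd dk nat_pow_pow[OF fc] by simp
    have zp: "z [^] p = \<one>" using z_def yd dk nat_pow_pow[OF yc] by simp
    have x1: "x \<noteq> \<one>"
    proof
      assume "x = \<one>"
      hence "d dvd k" using pow_eq_id[OF fc] x_def d_def by simp
      moreover have "k < d" using dk d0 p prime_gt_1_nat by simp
      moreover have "k > 0" using dk d0 by (cases k) auto
      ultimately show False by (simp add: nat_dvd_not_less)
    qed
    obtain i where "z = x [^] (i::nat)" using sqf_two_gen[OF Fs sq finF xF zF xz p(1) xp zp x1] by blast
    hence "y [^] k = f [^] (k * i)" using z_def x_def nat_pow_pow[OF fc] by simp
    hence "y [^] (int k) = f [^] (int (k * i))" by (simp only: int_pow_int)
    thus ?thesis using P_def k_def by blast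
  qed
  have e1: "e = 1"
  proof (rule ccontr)
    assume "e \<noteq> 1"
    then obtain q where q: "Factorial_Ring.prime q" "q dvd e" using prime_factor_nat by blast
    have qd: "q dvd d" using q(2) edvd[OF Pd] by (rule dvd_trans)
    have "e dvd d div q" using edvd Pp[OF q(1) qd] by blast
    hence "q dvd d div q" using q(2) dvd_trans by blast
    hence "q * q dvd d" using qd by (metis dvd_div_iff_mult q(1) not_prime_0 dvd_mult_div_cancel mult_dvd_mono dvd_refl)
    hence "q ^ 2 dvd d" by (simp add: power2_eq_square)
    hence "is_unit q" using sqd squarefreeD by blast
    thus False using q(1) by simp
  qed
  obtain i :: int where "y [^] (int 1) = f [^] i" using eP e1 unfolding P_def by blast
  hence "y = f [^] i" using yc by (simp add: int_pow_int)
  hence "g \<otimes> f \<otimes> inv g = f [^] i" using y_def by simp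
  thus ?thesis by blast
qed

lemma Fitting_conj_commute:
  assumes fin: "finite (carrier G)" and sq: "squarefree (card (Fitting G))"
    and g: "g \<in> carrier G" and h: "h \<in> carrier G" and f: "f \<in> Fitting G"
  shows "g \<otimes> (h \<otimes> f \<otimes> inv h) \<otimes> inv g = h \<otimes> (g \<otimes> f \<otimes> inv g) \<otimes> inv h"
proof -
  have fc: "f \<in> carrier G" using f subgroup.mem_carrier[OF Fitting_subgroup] by simp
  obtain k :: int where k: "g \<otimes> f \<otimes> inv g = f [^] k" using Fitting_power_map[OF fin sq g f] by blast
  obtain l :: int where l: "h \<otimes> f \<otimes> inv h = f [^] l" using Fitting_power_map[OF fin sq h f] by blast
  have "g \<otimes> (h \<otimes> f \<otimes> inv h) \<otimes> inv g = (g \<otimes> f \<otimes> inv g) [^] l"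
    using l conj_int_pow[OF g fc] by simp
  also have "\<dots> = f [^] (k * l)" using k fc by (simp add: int_pow_pow)
  also have "\<dots> = (f [^] l) [^] k" using fc by (simp add: int_pow_pow mult.commute)
  also have "\<dots> = (h \<otimes> f \<otimes> inv h) [^] k" using l by simp
  also have "\<dots> = h \<otimes> (g \<otimes> f \<otimes> inv g) \<otimes> inv h" using k conj_int_pow[OF h fc] by simp
  finally show ?thesis .
qed

end

locale L4p6 =
  fixes V :: "'a set" and adj :: "'a \<Rightarrow> 'a \<Rightarrow> bool" and G :: "('a \<Rightarrow> 'a) set"
  assumes finV: "finite V"
    and sg: "simple_graph V adj"
    and conn: "connected_graph V adj"
    and aut: "aut_group V adj G"
    and dt: "dist2_transitive V adj G"
    and sol: "solvable ((BijGroup V)\<lparr>carrier := G\<rparr>)"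
    and sqF: "squarefree (card (Fitting ((BijGroup V)\<lparr>carrier := G\<rparr>)))"
begin

definition "Gr = (BijGroup V)\<lparr>carrier := G\<rparr>"
abbreviation "FF \<equiv> Fitting Gr"

lemma carrier_Gr [simp]: "carrier Gr = G" by (simp add: Gr_def)
lemma solGr: "solvable Gr" using sol by (simp add: Gr_def)
lemma sqFF: "squarefree (card FF)" using sqF by (simp add: Gr_def)

lemma sub: "subgroup G (BijGroup V)" using aut unfolding aut_group_def by blast

lemma grp: "group Gr" using subgroup.subgroup_is_group[OF sub group_BijGroup] by (simp add: Gr_def)

lemma GBij: "g \<in> G \<Longrightarrow> g \<in> Bij V" using subgroup.subset[OF sub] by (auto simp: BijGroup_def)

lemma app: "g \<in> G \<Longrightarrow> x \<in> V \<Longrightarrow> g x \<in> V"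
  using GBij Bij_imp_funcset by blast

lemma mult_app: "g \<in> G \<Longrightarrow> h \<in> G \<Longrightarrow> x \<in> V \<Longrightarrow> (g \<otimes>\<^bsub>Gr\<^esub> h) x = g (h x)"
  using GBij by (simp add: Gr_def BijGroup_def compose_def)

lemma one_app: "x \<in> V \<Longrightarrow> \<one>\<^bsub>Gr\<^esub> x = x"
  by (simp add: Gr_def BijGroup_def)

lemma inv_eq: "g \<in> G \<Longrightarrow> inv\<^bsub>Gr\<^esub> g = (\<lambda>x \<in> V. (inv_into V g) x)"
  using group.m_inv_consistent[OF group_BijGroup sub] inv_BijGroup GBij unfolding Gr_def by metis

lemma inv_app1: "g \<in> G \<Longrightarrow> x \<in> V \<Longrightarrow> (inv\<^bsub>Gr\<^esub> g) (g x) = x"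
proof -
  assume g: "g \<in> G" and x: "x \<in> V"
  have "bij_betw g V V" using GBij[OF g] by (simp add: Bij_def)
  thus ?thesis using inv_eq[OF g] x app[OF g x] by (simp add: bij_betw_inv_into_left)
qed

lemma inv_app2: "g \<in> G \<Longrightarrow> x \<in> V \<Longrightarrow> g ((inv\<^bsub>Gr\<^esub> g) x) = x"
proof -
  assume g: "g \<in> G" and x: "x \<in> V"
  have "bij_betw g V V" using GBij[OF g] by (simp add: Bij_def)
  thus ?thesis using inv_eq[OF g] x by (simp add: bij_betw_inv_into_right)
qed

lemma inv_mem: "g \<in> G \<Longrightarrow> inv\<^bsub>Gr\<^esub> g \<in> G"
  using group.inv_closed[OF grp] carrier_Gr by blast

lemma mult_mem: "g \<in> G \<Longrightarrow> h \<in> G \<Longrightarrow> g \<otimes>\<^bsub>Gr\<^esub> h \<in> G"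
  using monoid.m_closed[OF group.is_monoid[OF grp]] carrier_Gr by blast

lemma ext: "g \<in> G \<Longrightarrow> h \<in> G \<Longrightarrow> (\<And>x. x \<in> V \<Longrightarrow> g x = h x) \<Longrightarrow> g = h"
  using GBij Bij_imp_extensional extensionalityI by metis

lemma inj: "g \<in> G \<Longrightarrow> x \<in> V \<Longrightarrow> y \<in> V \<Longrightarrow> g x = g y \<Longrightarrow> x = y"
  using inv_app1 by metis

lemma finGr: "finite (carrier Gr)"
proof -
  have "G \<subseteq> V \<rightarrow>\<^sub>E V"
  proof
    fix g assume "g \<in> G"
    hence gb: "g \<in> Bij V" using GBij by blast
    hence "g \<in> V \<rightarrow> V" "g \<in> extensional V" using Bij_imp_funcset[OF gb] Bij_imp_extensional[OF gb] by auto
    thus "g \<in> V \<rightarrow>\<^sub>E V" by (simp add: PiE_def)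
  qed
  moreover have "finite (V \<rightarrow>\<^sub>E V)" using finV by (simp add: finite_PiE)
  ultimately show ?thesis using finite_subset by simp
qed

lemma adjV: "adj x y \<Longrightarrow> x \<in> V \<and> y \<in> V" using sg unfolding simple_graph_def by blast
lemma adj_sym: "adj x y \<Longrightarrow> adj y x" using sg unfolding simple_graph_def by blast
lemma adj_irr: "\<not> adj x x" using sg unfolding simple_graph_def by blast

lemma aut_adj: "g \<in> G \<Longrightarrow> x \<in> V \<Longrightarrow> y \<in> V \<Longrightarrow> adj (g x) (g y) \<longleftrightarrow> adj x y"
  using aut unfolding aut_group_def by blast

lemma reach_V: "reach adj k x y \<Longrightarrow> x \<in> V \<Longrightarrow> y \<in> V"
  by (induct k arbitrary: x) (auto dest: adjV)

lemma reach_pres: "g \<in> G \<Longrightarrow> x \<in> V \<Longrightarrow> y \<in> V \<Longrightarrow> reach adj k (g x) (g y) \<longleftrightarrow> reach adj k x y"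
proof (induct k arbitrary: x)
  case 0 then show ?case using inj app by auto
next
  case (Suc k)
  show ?case
  proof
    assume "reach adj (Suc k) (g x) (g y)"
    then obtain z where z: "adj (g x) z" "reach adj k z (g y)" by auto
    have zV: "z \<in> V" using adjV z(1) by blast
    define z' where "z' = (inv\<^bsub>Gr\<^esub> g) z"
    have z'V: "z' \<in> V" using z'_def app[OF inv_mem[OF Suc(2)] zV] by simp
    have gz: "g z' = z" using inv_app2[OF Suc(2) zV] z'_def by simp
    have "adj x z'" using aut_adj[OF Suc(2) Suc(3) z'V] z(1) gz by simp
    moreover have "reach adj k z' y" using Suc(1)[OF Suc(2) z'V Suc(4)] z(2) gz by simp
    ultimately show "reach adj (Suc k) x y" by auto
  next
    assume "reach adj (Suc k) x y"
    then obtain z where z: "adj x z" "reach adj k z y" by auto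
    have zV: "z \<in> V" using adjV z(1) by blast
    have "adj (g x) (g z)" using aut_adj[OF Suc(2) Suc(3) zV] z(1) by simp
    moreover have "reach adj k (g z) (g y)" using Suc(1)[OF Suc(2) zV Suc(4)] z(2) by simp
    ultimately show "reach adj (Suc k) (g x) (g y)" by auto
  qed
qed

lemma sphere_pres: "g \<in> G \<Longrightarrow> x \<in> V \<Longrightarrow> v \<in> V \<Longrightarrow> g v \<in> sphere V adj i (g x) \<longleftrightarrow> v \<in> sphere V adj i x"
  unfolding sphere_def using reach_pres app by auto

lemma sphere1: "v \<in> sphere V adj 1 x \<longleftrightarrow> adj x v"
  unfolding sphere_def using adjV adj_irr by auto

lemma reach2: "reach adj 2 x v \<longleftrightarrow> (\<exists>y. adj x y \<and> adj y v)"
  by (simp add: numeral_2_eq_2)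

end

context L4p6
begin

abbreviation "gm a b \<equiv> a \<otimes>\<^bsub>Gr\<^esub> b"
abbreviation "gi a \<equiv> inv\<^bsub>Gr\<^esub> a"
abbreviation "e1 \<equiv> \<one>\<^bsub>Gr\<^esub>"
abbreviation "cj x f \<equiv> x \<otimes>\<^bsub>Gr\<^esub> f \<otimes>\<^bsub>Gr\<^esub> inv\<^bsub>Gr\<^esub> x"
definition orb where "orb v = (\<lambda>h. h v) ` FF"

lemma Gr_r_one [simp]: "g \<in> G \<Longrightarrow> gm g e1 = g"
  using monoid.r_one[OF group.is_monoid[OF grp]] by simp
lemma Gr_l_one [simp]: "g \<in> G \<Longrightarrow> gm e1 g = g"
  using monoid.l_one[OF group.is_monoid[OF grp]] by simp
lemma Gr_r_inv [simp]: "g \<in> G \<Longrightarrow> gm g (gi g) = e1"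
  using group.r_inv[OF grp] by simp
lemma Gr_l_inv [simp]: "g \<in> G \<Longrightarrow> gm (gi g) g = e1"
  using group.l_inv[OF grp] by simp
lemma Gr_assoc: "a \<in> G \<Longrightarrow> b \<in> G \<Longrightarrow> c \<in> G \<Longrightarrow> gm (gm a b) c = gm a (gm b c)"
  using monoid.m_assoc[OF group.is_monoid[OF grp]] by simp

lemma Fsub: "subgroup FF Gr" using group.Fitting_subgroup[OF grp] .
lemma Fnorm: "FF \<lhd> Gr" using group.Fitting_normal[OF grp] .
lemma FG: "f \<in> FF \<Longrightarrow> f \<in> G" using subgroup.mem_carrier[OF Fsub] by simp
lemma finF: "finite FF" using finGr subgroup.subset[OF Fsub] finite_subset by blast
lemma Fabel: "f \<in> FF \<Longrightarrow> h \<in> FF \<Longrightarrow> gm f h = gm h f"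
  using group.Fitting_abelian[OF grp finGr sqFF] by blast
lemma oneF: "e1 \<in> FF" using subgroup.one_closed[OF Fsub] .
lemma oneG: "e1 \<in> G" using monoid.one_closed[OF group.is_monoid[OF grp]] by simp
lemma invF: "f \<in> FF \<Longrightarrow> gi f \<in> FF" using subgroup.m_inv_closed[OF Fsub] by blast
lemma multF: "f \<in> FF \<Longrightarrow> h \<in> FF \<Longrightarrow> gm f h \<in> FF" using subgroup.m_closed[OF Fsub] by blast
lemma conjF: "g \<in> G \<Longrightarrow> f \<in> FF \<Longrightarrow> cj g f \<in> FF"
  using normal.inv_op_closed2[OF Fnorm] by simp
lemma conj_app: "g \<in> G \<Longrightarrow> f \<in> G \<Longrightarrow> x \<in> V \<Longrightarrow> (cj g f) (g x) = g (f x)"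
  using mult_app mult_mem inv_mem inv_app1 app by simp

lemma orbI: "f \<in> FF \<Longrightarrow> f x = y \<Longrightarrow> y \<in> orb x"
  unfolding orb_def by (rule rev_image_eqI[of f FF y "\<lambda>h. h x"]) auto

lemma orbE: "y \<in> orb x \<Longrightarrow> \<exists>f\<in>FF. y = f x"
  unfolding orb_def by auto

lemma orb_self: "v \<in> V \<Longrightarrow> v \<in> orb v"
  using orbI[OF oneF one_app] by blast
lemma orb_V: "v \<in> V \<Longrightarrow> y \<in> orb v \<Longrightarrow> y \<in> V"
  using FG app orbE by blast
lemma orb_sym: "x \<in> V \<Longrightarrow> y \<in> orb x \<Longrightarrow> x \<in> orb y"
proof -
  assume x: "x \<in> V" and "y \<in> orb x"
  then obtain f where f: "f \<in> FF" "y = f x" using orbE by blast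
  have "(gi f) y = x" using inv_app1[OF FG[OF f(1)] x] f by simp
  thus "x \<in> orb y" using orbI[OF invF[OF f(1)]] by blast
qed
lemma orb_trans: "x \<in> V \<Longrightarrow> y \<in> orb x \<Longrightarrow> z \<in> orb y \<Longrightarrow> z \<in> orb x"
proof -
  assume x: "x \<in> V" and "y \<in> orb x" "z \<in> orb y"
  then obtain f h where f: "f \<in> FF" "y = f x" "h \<in> FF" "z = h y" using orbE by metis
  have "(gm h f) x = z" using mult_app[OF FG[OF f(3)] FG[OF f(1)] x] f by simp
  thus "z \<in> orb x" using orbI[OF multF[OF f(3) f(1)]] by blast
qed
lemma orb_eq: "x \<in> V \<Longrightarrow> y \<in> orb x \<Longrightarrow> orb y = orb x"
proof -
  assume x: "x \<in> V" and y: "y \<in> orb x"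
  have yV: "y \<in> V" using orb_V x y by blast
  show "orb y = orb x"
  proof
    show "orb y \<subseteq> orb x" using orb_trans[OF x y] by blast
    show "orb x \<subseteq> orb y" using orb_trans[OF yV orb_sym[OF x y]] by blast
  qed
qed
lemma orb_G: "g \<in> G \<Longrightarrow> x \<in> V \<Longrightarrow> y \<in> orb x \<Longrightarrow> g y \<in> orb (g x)"
proof -
  assume g: "g \<in> G" and x: "x \<in> V" and "y \<in> orb x"
  then obtain f where f: "f \<in> FF" "y = f x" using orbE by blast
  have "(cj g f) (g x) = g y" using conj_app[OF g FG[OF f(1)] x] f by simp
  thus "g y \<in> orb (g x)" using orbI[OF conjF[OF g f(1)]] by blast
qed
lemma orb_G_iff: "g \<in> G \<Longrightarrow> x \<in> V \<Longrightarrow> y \<in> V \<Longrightarrow> g y \<in> orb (g x) \<longleftrightarrow> y \<in> orb x"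
proof
  assume g: "g \<in> G" and x: "x \<in> V" and y: "y \<in> V" and h: "g y \<in> orb (g x)"
  have "(gi g) (g y) \<in> orb ((gi g) (g x))" using orb_G[OF inv_mem[OF g] app[OF g x] h] .
  thus "y \<in> orb x" using inv_app1[OF g x] inv_app1[OF g y] by simp
qed (rule orb_G)

lemma vt: "u \<in> V \<Longrightarrow> v \<in> V \<Longrightarrow> \<exists>g\<in>G. g u = v"
  using dt unfolding dist2_transitive_def by blast
lemma st: "u \<in> V \<Longrightarrow> i \<in> {1,2} \<Longrightarrow> v \<in> sphere V adj i u \<Longrightarrow> w \<in> sphere V adj i u \<Longrightarrow>
    \<exists>g\<in>G. g u = u \<and> g v = w"
  using dt unfolding dist2_transitive_def by blast

end

locale L4p6two = L4p6 +
  assumes two: "card (vertex_orbits (Fitting ((BijGroup V)\<lparr>carrier := G\<rparr>)) V) = 2"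
begin

lemma two_classes_ex: "\<exists>O1 O2. orb ` V = {O1, O2} \<and> O1 \<noteq> O2"
proof -
  have "vertex_orbits FF V = orb ` V" unfolding vertex_orbits_def orb_def by auto
  hence "card (orb ` V) = 2" using two by (simp add: Gr_def)
  thus ?thesis unfolding card_2_iff by blast
qed

lemma two_classes: "x \<in> V \<Longrightarrow> y \<in> V \<Longrightarrow> z \<in> V \<Longrightarrow> y \<notin> orb x \<Longrightarrow> z \<notin> orb x \<Longrightarrow> z \<in> orb y"
proof -
  assume x: "x \<in> V" and y: "y \<in> V" and z: "z \<in> V" and yx: "y \<notin> orb x" and zx: "z \<notin> orb x"
  obtain O1 O2 where O: "orb ` V = {O1, O2}" "O1 \<noteq> O2" using two_classes_ex by blast
  have ny: "orb y \<noteq> orb x"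
  proof
    assume "orb y = orb x"
    hence "y \<in> orb x" using orb_self[OF y] by (simp only:)
    thus False using yx by (simp only:)
  qed
  have nz: "orb z \<noteq> orb x"
  proof
    assume "orb z = orb x"
    hence "z \<in> orb x" using orb_self[OF z] by (simp only:)
    thus False using zx by (simp only:)
  qed
  have "orb x \<in> orb ` V" "orb y \<in> orb ` V" "orb z \<in> orb ` V" using x y z by auto
  hence "orb x \<in> {O1, O2}" "orb y \<in> {O1, O2}" "orb z \<in> {O1, O2}" using O(1) by (simp_all only:)
  hence zy: "orb z = orb y" using ny nz by blast
  have "z \<in> orb z" using orb_self[OF z] .
  thus "z \<in> orb y" using zy by (simp only:)
qed

lemma two_ex: "\<exists>u\<in>V. \<exists>w\<in>V. w \<notin> orb u"
proof -
  obtain O1 O2 where O: "orb ` V = {O1, O2}" "O1 \<noteq> O2" using two_classes_ex by blast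
  have "O1 \<in> orb ` V" "O2 \<in> orb ` V" using O(1) by auto
  then obtain u w where u: "u \<in> V" "orb u = O1" and w: "w \<in> V" "orb w = O2"
    by (auto elim!: imageE)
  have "w \<notin> orb u" using orb_eq[OF u(1)] u w O by metis
  thus ?thesis using u w by blast
qed

lemma cross_aux: "reach adj k x v \<Longrightarrow> x \<in> V \<Longrightarrow> v \<notin> orb x \<Longrightarrow> \<exists>c d. adj c d \<and> d \<notin> orb c"
proof (induct k arbitrary: x)
  case 0 then show ?case using orb_self by auto
next
  case (Suc k)
  then obtain y where y: "adj x y" "reach adj k y v" by auto
  have yV: "y \<in> V" using adjV y(1) by blast
  show ?case
  proof (cases "y \<in> orb x")
    case True
    have "v \<notin> orb y" using orb_eq[OF Suc(3) True] Suc(4) by simp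
    then show ?thesis using Suc(1)[OF y(2) yV] by blast
  next
    case False then show ?thesis using y(1) by blast
  qed
qed

lemma cross: "\<exists>c d. adj c d \<and> d \<notin> orb c"
proof -
  obtain u w where u: "u \<in> V" "w \<in> V" "w \<notin> orb u" using two_ex by blast
  obtain k where "reach adj k u w" using conn u unfolding connected_graph_def by blast
  thus ?thesis using cross_aux u by blast
qed

lemma bip: "adj a b \<Longrightarrow> b \<notin> orb a"
proof
  assume ab: "adj a b" and ba: "b \<in> orb a"
  obtain c d where cd: "adj c d" "d \<notin> orb c" using cross by blast
  have aV: "a \<in> V" and bV: "b \<in> V" using adjV ab by auto
  have cV: "c \<in> V" and dV: "d \<in> V" using adjV cd by auto
  obtain g where g: "g \<in> G" "g a = c" using vt[OF aV cV] by blast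
  have cgb: "adj c (g b)" using aut_adj[OF g(1) aV bV] ab g by simp
  have gbo: "g b \<in> orb c" using orb_G[OF g(1) aV ba] g by simp
  have "g b \<in> sphere V adj 1 c" "d \<in> sphere V adj 1 c" using cgb cd sphere1 by auto
  then obtain h where h: "h \<in> G" "h c = c" "h (g b) = d" using st[OF cV] by blast
  have "h (g b) \<in> orb (h c)" using orb_G[OF h(1) cV gbo] .
  thus False using h cd by simp
qed

lemma pow_app: "f \<in> G \<Longrightarrow> x \<in> V \<Longrightarrow> f x = x \<Longrightarrow> (f [^]\<^bsub>Gr\<^esub> (n::nat)) x = x"
proof (induct n)
  case 0 then show ?case using one_app by simp
next
  case (Suc n)
  have pc: "f [^]\<^bsub>Gr\<^esub> n \<in> G" using monoid.nat_pow_closed[OF group.is_monoid[OF grp]] Suc by fastforce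
  have "f [^]\<^bsub>Gr\<^esub> Suc n = gm (f [^]\<^bsub>Gr\<^esub> n) f" using monoid.nat_pow_Suc[OF group.is_monoid[OF grp]] by blast
  then show ?case using mult_app[OF pc Suc(2,3)] Suc by simp
qed

lemma fix_orb: "f \<in> FF \<Longrightarrow> x \<in> V \<Longrightarrow> f x = x \<Longrightarrow> y \<in> orb x \<Longrightarrow> f y = y"
proof -
  assume f: "f \<in> FF" and x: "x \<in> V" and fx: "f x = x" and "y \<in> orb x"
  then obtain h where h: "h \<in> FF" "y = h x" using orbE by blast
  have "f y = (gm f h) x" using mult_app[OF FG[OF f] FG[OF h(1)] x] h by simp
  also have "\<dots> = (gm h f) x" using Fabel[OF f h(1)] by simp
  also have "\<dots> = y" using mult_app[OF FG[OF h(1)] FG[OF f] x] h fx by simp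
  finally show "f y = y" .
qed

lemma semireg: "f \<in> FF \<Longrightarrow> x \<in> V \<Longrightarrow> f x = x \<Longrightarrow> f = e1"
proof (rule ccontr)
  assume f: "f \<in> FF" and x: "x \<in> V" and fx: "f x = x" and f1: "f \<noteq> e1"
  have fG: "f \<in> G" using FG[OF f] .
  define d where "d = group.ord Gr f"
  have d1: "d \<ge> 1" using group.ord_ge_1[OF grp finGr] fG d_def by simp
  have dn1: "d \<noteq> 1" using group.ord_eq_1[OF grp] fG f1 d_def by simp
  obtain p where p: "Factorial_Ring.prime p" "p dvd d" using prime_factor_nat[OF dn1] by blast
  define k where "k = d div p"
  have dk: "d = k * p" using p k_def by simp
  define a where "a = f [^]\<^bsub>Gr\<^esub> k"
  have aF: "a \<in> FF" using a_def group.subgroup_nat_pow_closed[OF grp Fsub f] by simp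
  have aG: "a \<in> G" using FG[OF aF] .
  have fGr: "f \<in> carrier Gr" using fG by simp
  have "a [^]\<^bsub>Gr\<^esub> p = f [^]\<^bsub>Gr\<^esub> (k * p)"
    using a_def monoid.nat_pow_pow[OF group.is_monoid[OF grp] fGr, of k p] by simp
  also have "\<dots> = f [^]\<^bsub>Gr\<^esub> d" using dk by simp
  also have "\<dots> = e1" using group.pow_ord_eq_1[OF grp fGr] d_def by simp
  finally have ap: "a [^]\<^bsub>Gr\<^esub> p = e1" .
  have a1: "a \<noteq> e1"
  proof
    assume "a = e1"
    hence "d dvd k" using group.pow_eq_id[OF grp] fG a_def d_def by simp
    moreover have "k < d" using dk d1 p prime_gt_1_nat by simp
    moreover have "k > 0" using dk d1 by (cases k) auto
    ultimately show False by (simp add: nat_dvd_not_less)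
  qed
  have ax: "a x = x" using pow_app[OF fG x fx] a_def by simp
  obtain u w where uw: "u \<in> V" "w \<in> V" "w \<notin> orb u" using two_ex by blast
  obtain y where y: "y \<in> V" "y \<notin> orb x"
  proof (cases "u \<in> orb x")
    case True
    have "w \<notin> orb x" using orb_eq[OF x True] uw by simp
    then show ?thesis using that uw by blast
  next
    case False then show ?thesis using that uw by blast
  qed
  obtain t where t: "t \<in> G" "t x = y" using vt[OF x y(1)] by blast
  define b where "b = cj t a"
  have bF: "b \<in> FF" using conjF[OF t(1) aF] b_def by simp
  have bG: "b \<in> G" using FG[OF bF] .
  have by': "b y = y" using conj_app[OF t(1) aG x] t ax b_def by simp
  have "cj t (a [^]\<^bsub>Gr\<^esub> p) = (cj t a) [^]\<^bsub>Gr\<^esub> p"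
    using group.conj_nat_pow[OF grp, of t a p] t aG by simp
  hence bp: "b [^]\<^bsub>Gr\<^esub> p = e1" using ap b_def t inv_mem by simp
  have b1: "b \<noteq> e1"
  proof
    assume "b = e1"
    hence c1: "cj t a = e1" using b_def by simp
    have "gm (cj t a) t = gm (gm t a) (gm (gi t) t)"
      using Gr_assoc t aG inv_mem mult_mem by metis
    also have "\<dots> = gm t a" using t aG mult_mem by simp
    finally have "gm t a = gm t e1" using c1 t by simp
    hence "a = e1" using group.l_cancel_one[OF grp, of t a] t aG by simp
    thus False using a1 by simp
  qed
  have ab: "gm a b = gm b a" using Fabel[OF aF bF] .
  obtain i where bi: "b = a [^]\<^bsub>Gr\<^esub> (i::nat)"
    using group.sqf_two_gen[OF grp Fsub sqFF finF aF bF ab p(1) ap bp a1] by blast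
  have bx: "b x = x" using pow_app[OF aG x ax] bi by simp
  have "b v = v" if v: "v \<in> V" for v
  proof (cases "v \<in> orb x")
    case True then show ?thesis using fix_orb[OF bF x bx] by blast
  next
    case False
    hence "v \<in> orb y" using two_classes[OF x y(1) v y(2)] by blast
    then show ?thesis using fix_orb[OF bF y(1) by'] by blast
  qed
  hence "b = e1" using ext[OF bG oneG] one_app by simp
  thus False using b1 by simp
qed

lemma semireg2: "f \<in> FF \<Longrightarrow> h \<in> FF \<Longrightarrow> x \<in> V \<Longrightarrow> f x = h x \<Longrightarrow> f = h"
proof -
  assume f: "f \<in> FF" and h: "h \<in> FF" and x: "x \<in> V" and e: "f x = h x"
  have "(gm (gi h) f) x = x" using mult_app[OF inv_mem[OF FG[OF h]] FG[OF f] x] e inv_app1[OF FG[OF h] x] by simp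
  hence "gm (gi h) f = e1" using semireg[OF multF[OF invF[OF h] f] x] by simp
  hence "gm h (gm (gi h) f) = h" using FG[OF h] monoid.r_one[OF group.is_monoid[OF grp]] by simp
  thus "f = h" using FG[OF h] FG[OF f] group.inv_closed[OF grp]
    by (simp add: monoid.m_assoc[OF group.is_monoid[OF grp], symmetric] group.r_inv[OF grp] monoid.l_one[OF group.is_monoid[OF grp]])
qed

end

context group
begin

lemma cj_cancel:
  assumes g: "g \<in> carrier G" and t: "t \<in> carrier G" and e: "e \<in> carrier G"
    and h: "t \<otimes> e \<otimes> inv t = g \<otimes> e \<otimes> inv g"
  shows "(inv g \<otimes> t) \<otimes> e \<otimes> inv (inv g \<otimes> t) = e"
proof -
  have "(inv g \<otimes> t) \<otimes> e \<otimes> inv (inv g \<otimes> t) = inv g \<otimes> (t \<otimes> e \<otimes> inv t) \<otimes> g"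
    using g t e by (simp add: inv_mult_group m_assoc)
  also have "\<dots> = inv g \<otimes> (g \<otimes> e \<otimes> inv g) \<otimes> g" using h by simp
  also have "\<dots> = e" using g e by (simp add: m_assoc)
  finally show ?thesis .
qed

lemma conj_mult:
  assumes "x \<in> carrier G" "a \<in> carrier G" "b \<in> carrier G"
  shows "x \<otimes> (a \<otimes> b) \<otimes> inv x = (x \<otimes> a \<otimes> inv x) \<otimes> (x \<otimes> b \<otimes> inv x)"
  using assms by (simp add: m_assoc)

lemma conj_one: "x \<in> carrier G \<Longrightarrow> x \<otimes> \<one> \<otimes> inv x = \<one>"
  by simp

lemma conj_fix_comm:
  assumes "x \<in> carrier G" "f \<in> carrier G" "x \<otimes> f \<otimes> inv x = f"
  shows "x \<otimes> f = f \<otimes> x"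
proof -
  have "x \<otimes> f = x \<otimes> f \<otimes> inv x \<otimes> x" using assms(1,2) by (simp add: m_assoc)
  thus ?thesis using assms(3) by simp
qed

end

context L4p6two
begin

lemma same2: "adj x y \<Longrightarrow> adj y z \<Longrightarrow> z \<in> orb x"
proof (rule ccontr)
  assume xy: "adj x y" and yz: "adj y z" and zx: "z \<notin> orb x"
  have V: "x \<in> V" "y \<in> V" "z \<in> V" using adjV xy yz by auto
  have "z \<in> orb y" using two_classes[OF V(1) V(2) V(3) bip[OF xy] zx] .
  thus False using bip[OF yz] by simp
qed

lemma nbr_other: "x \<in> V \<Longrightarrow> x' \<in> V \<Longrightarrow> x' \<notin> orb x \<Longrightarrow> adj x y \<Longrightarrow> y \<in> orb x'"
  using two_classes bip adjV by blast

lemma sphere2: "x \<in> V \<Longrightarrow> v \<in> sphere V adj 2 x \<longleftrightarrow> v \<noteq> x \<and> (\<exists>y. adj x y \<and> adj y v)"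
proof
  assume x: "x \<in> V" and v: "v \<in> sphere V adj 2 x"
  have "reach adj 2 x v" "\<forall>j<2. \<not> reach adj j x v" using v unfolding sphere_def by auto
  hence "reach adj 2 x v" "\<not> reach adj 0 x v" by (auto dest: spec[of _ 0])
  thus "v \<noteq> x \<and> (\<exists>y. adj x y \<and> adj y v)" using reach2 by auto
next
  assume x: "x \<in> V" and h: "v \<noteq> x \<and> (\<exists>y. adj x y \<and> adj y v)"
  then obtain y where y: "adj x y" "adj y v" by blast
  have vV: "v \<in> V" using adjV y by blast
  have "v \<in> orb x" using same2[OF y] .
  hence nadj: "\<not> adj x v" using bip by blast
  have "\<forall>j<2. \<not> reach adj j x v"
  proof (intro allI impI)
    fix j :: nat assume "j < 2"
    hence "j = 0 \<or> j = 1" by auto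
    thus "\<not> reach adj j x v" using h nadj by auto
  qed
  moreover have "reach adj 2 x v" using reach2 y by blast
  ultimately show "v \<in> sphere V adj 2 x" unfolding sphere_def using vV by blast
qed

lemma swap:
  assumes f: "f \<in> FF" and x: "x \<in> V" and x': "x' \<in> V" and xx: "x' \<notin> orb x"
    and y: "adj x y" "adj y (f x)"
  shows "\<exists>z. adj x' z \<and> adj z (f x')"
proof -
  have "y \<in> orb x'" using nbr_other[OF x x' xx y(1)] .
  then obtain h where h: "h \<in> FF" "y = h x'" using orbE by blast
  have hG: "h \<in> G" and fG: "f \<in> G" using FG h f by auto
  have fx: "f x \<in> V" using app[OF fG x] .
  define z where "z = (gi h) (f x)"
  have zV: "z \<in> V" using z_def app[OF inv_mem[OF hG] fx] by simp
  have hz: "h z = f x" using z_def inv_app2[OF hG fx] by simp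
  have "adj (h x') (h z)" using y(2) h(2) hz by simp
  hence a1: "adj x' z" using aut_adj[OF hG x' zV] by simp
  have hxV: "(gi h) x \<in> V" using app[OF inv_mem[OF hG] x] .
  have "gm (gi h) f = gm f (gi h)" using Fabel[OF invF[OF h(1)] f] .
  hence "z = f ((gi h) x)"
    using z_def mult_app[OF inv_mem[OF hG] fG x] mult_app[OF fG inv_mem[OF hG] x] by metis
  hence fz: "(gi f) z = (gi h) x" using inv_app1[OF fG hxV] by simp
  have ff: "(gi f) (f x') = x'" using inv_app1[OF fG x'] .
  have "adj (h ((gi h) x)) (h x')" using y(1) h(2) inv_app2[OF hG x] by simp
  hence "adj ((gi h) x) x'" using aut_adj[OF hG hxV x'] by simp
  hence "adj ((gi f) z) ((gi f) (f x'))" using fz ff by simp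
  hence a2: "adj z (f x')" using aut_adj[OF inv_mem[OF fG] zV app[OF fG x']] by simp
  show ?thesis using a1 a2 by blast
qed

lemma Esym:
  assumes f: "f \<in> FF" and x: "x \<in> V" and x': "x' \<in> V" and xx: "x' \<notin> orb x"
    and s: "f x \<in> sphere V adj 2 x"
  shows "f x' \<in> sphere V adj 2 x'"
proof -
  have s2: "f x \<noteq> x" "\<exists>y. adj x y \<and> adj y (f x)" using s sphere2[OF x] by auto
  have "f \<noteq> e1" using s2(1) one_app[OF x] by auto
  hence "f x' \<noteq> x'" using semireg[OF f x'] by blast
  moreover have "\<exists>z. adj x' z \<and> adj z (f x')" using swap[OF f x x' xx] s2(2) by blast
  ultimately show ?thesis using sphere2[OF x'] by blast
qed

lemma walk2: "reach adj k x v \<Longrightarrow> x \<noteq> v \<Longrightarrow> \<not> adj x v \<Longrightarrow> \<exists>y z. adj x y \<and> adj y z \<and> z \<noteq> x"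
proof (induct k arbitrary: x rule: less_induct)
  case (less k)
  show ?case
  proof (cases k)
    case 0 then show ?thesis using less by simp
  next
    case (Suc k1)
    show ?thesis
    proof (cases k1)
      case 0 then show ?thesis using less Suc by simp
    next
      case (Suc k2)
      obtain y z where yz: "adj x y" "adj y z" "reach adj k2 z v"
        using less(2) \<open>k = Suc k1\<close> Suc by auto
      show ?thesis
      proof (cases "z = x")
        case True
        have "k2 < k" using \<open>k = Suc k1\<close> Suc by simp
        then show ?thesis using less(1)[of k2 x] yz True less(3,4) by blast
      next
        case False then show ?thesis using yz by blast
      qed
    qed
  qed
qed

lemma exists_d2: "u \<in> V \<Longrightarrow> \<exists>v. v \<in> sphere V adj 2 u"
proof -
  assume u: "u \<in> V"
  obtain a b where ab: "a \<in> V" "b \<in> V" "\<forall>j\<le>1. \<not> reach adj j a b"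
    using dt unfolding dist2_transitive_def by blast
  obtain g where g: "g \<in> G" "g a = u" using vt[OF ab(1) u] by blast
  have n0: "\<not> reach adj 0 a b" and n1: "\<not> reach adj 1 a b" using ab(3) by auto
  have "\<not> reach adj 0 (g a) (g b)" using reach_pres[OF g(1) ab(1) ab(2), of 0] n0 by blast
  hence ne1: "u \<noteq> g b" using g(2) by simp
  have "\<not> reach adj 1 (g a) (g b)" using reach_pres[OF g(1) ab(1) ab(2), of 1] n1 by blast
  hence ne2: "\<not> adj u (g b)" using g(2) by simp
  note ne = ne1 ne2
  obtain k where "reach adj k u (g b)" using conn u app[OF g(1) ab(2)] unfolding connected_graph_def by blast
  then obtain y z where "adj u y" "adj y z" "z \<noteq> u" using walk2 ne by blast
  thus ?thesis using sphere2[OF u] by blast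
qed

end

context L4p6two
begin

lemma contradiction: False
proof -
  obtain u w where uw: "adj u w" "w \<notin> orb u" using cross by blast
  have uV: "u \<in> V" and wV: "w \<in> V" using adjV uw(1) by auto
  have uw': "u \<notin> orb w" using uw(2) orb_sym[OF wV] by blast
  obtain t where t: "t \<in> G" "t u = w" using vt[OF uV wV] by blast
  obtain v0 where v0: "v0 \<in> sphere V adj 2 u" using exists_d2[OF uV] by blast
  have "v0 \<in> orb u" using v0 sphere2[OF uV] same2 by blast
  then obtain e0 where e0: "e0 \<in> FF" "v0 = e0 u" using orbE by blast
  have e0G: "e0 \<in> G" using FG[OF e0(1)] .
  define s where "s = cj t e0"
  have sF: "s \<in> FF" using conjF[OF t(1) e0(1)] s_def by simp
  have "s w = t (e0 u)" using conj_app[OF t(1) e0G uV] t(2) s_def by simp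
  moreover have "t (e0 u) \<in> sphere V adj 2 w"
    using sphere_pres[OF t(1) uV app[OF e0G uV]] v0 e0 t(2) by simp
  ultimately have "s w \<in> sphere V adj 2 w" by simp
  hence su: "s u \<in> sphere V adj 2 u" using Esym[OF sF wV uV uw'] by blast
  obtain g where g: "g \<in> G" "g u = u" "g (e0 u) = s u"
    using st[OF uV _ v0[unfolded e0(2)] su] by blast
  have "(cj g e0) u = s u" using conj_app[OF g(1) e0G uV] g by simp
  hence gs: "cj g e0 = s" using semireg2[OF conjF[OF g(1) e0(1)] sF uV] by simp
  define c where "c = gm (gi g) t"
  have cG: "c \<in> G" using c_def mult_mem inv_mem g t by simp
  have ce0: "cj c e0 = e0"
    using group.cj_cancel[OF grp, of g t e0] g t e0G gs s_def c_def by simp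
  have Ec: "cj c e = e" if e: "e \<in> FF" "e u \<in> sphere V adj 2 u" for e
  proof -
    obtain h where h: "h \<in> G" "h u = u" "h (e0 u) = e u"
      using st[OF uV _ v0[unfolded e0(2)] e(2)] by blast
    have "(cj h e0) u = e u" using conj_app[OF h(1) e0G uV] h by simp
    hence he: "cj h e0 = e" using semireg2[OF conjF[OF h(1) e0(1)] e(1) uV] by simp
    have "cj c (cj h e0) = cj h (cj c e0)"
      using group.Fitting_conj_commute[OF grp finGr sqFF, of c h e0] cG h(1) e0(1) by simp
    thus ?thesis using he ce0 by simp
  qed
  define H where "H = {f \<in> FF. cj c f = f}"
  have oneH: "e1 \<in> H" using H_def oneF group.conj_one[OF grp] cG by simp
  have multH: "gm f1 f2 \<in> H" if "f1 \<in> H" "f2 \<in> H" for f1 f2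
  proof -
    have f: "f1 \<in> FF" "f2 \<in> FF" "cj c f1 = f1" "cj c f2 = f2" using that H_def by auto
    have "cj c (gm f1 f2) = gm (cj c f1) (cj c f2)"
      using group.conj_mult[OF grp, of c f1 f2] cG FG f by simp
    thus ?thesis using f H_def multF by simp
  qed
  have reachH: "\<And>f v. f \<in> H \<Longrightarrow> reach adj k (f u) v \<Longrightarrow> v \<in> orb u \<Longrightarrow> \<exists>f'\<in>H. v = f' u" for k
  proof (induct k rule: less_induct)
    case (less k)
    fix f v assume fH: "f \<in> H" and r: "reach adj k (f u) v" and vu: "v \<in> orb u"
    have fF: "f \<in> FF" using fH H_def by simp
    have fG: "f \<in> G" using FG[OF fF] .
    have fuV: "f u \<in> V" using app[OF fG uV] .
    have fuo: "f u \<in> orb u" using orbI[OF fF] by simp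
    have ofu: "orb (f u) = orb u" using orb_eq[OF uV fuo] .
    show "\<exists>f'\<in>H. v = f' u"
    proof (cases k)
      case 0 then show ?thesis using r fH by auto
    next
      case (Suc k1)
      show ?thesis
      proof (cases k1)
        case 0
        hence "adj (f u) v" using r Suc by simp
        hence "v \<notin> orb (f u)" using bip by blast
        then show ?thesis using vu ofu by simp
      next
        case (Suc k2)
        obtain y z where yz: "adj (f u) y" "adj y z" "reach adj k2 z v"
          using r \<open>k = Suc k1\<close> Suc by auto
        have k2: "k2 < k" using \<open>k = Suc k1\<close> Suc by simp
        have zV: "z \<in> V" using adjV yz(2) by blast
        have "z \<in> orb (f u)" using same2[OF yz(1,2)] .
        hence "z \<in> orb u" using ofu by simp
        then obtain f2 where f2: "f2 \<in> FF" "z = f2 u" using orbE by blast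
        have f2G: "f2 \<in> G" using FG[OF f2(1)] .
        show ?thesis
        proof (cases "z = f u")
          case True
          then show ?thesis using less(1)[OF k2 fH] yz(3) vu by simp
        next
          case False
          have "z \<in> sphere V adj 2 (f u)" using sphere2[OF fuV] False yz(1,2) by blast
          hence "(gi f) z \<in> sphere V adj 2 ((gi f) (f u))"
            using sphere_pres[OF inv_mem[OF fG] fuV zV] by simp
          hence s2: "(gi f) z \<in> sphere V adj 2 u" using inv_app1[OF fG uV] by simp
          define e where "e = gm (gi f) f2"
          have eF: "e \<in> FF" using e_def multF[OF invF[OF fF] f2(1)] by simp
          have "e u = (gi f) z" using e_def mult_app[OF inv_mem[OF fG] f2G uV] f2(2) by simp
          hence "cj c e = e" using Ec[OF eF] s2 by simp
          hence eH: "e \<in> H" using H_def eF by simp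
          have "gm f e = f2" using e_def fG f2G group.cancel_inv1[OF grp] by simp
          hence f2H: "f2 \<in> H" using multH[OF fH eH] by simp
          show ?thesis using less(1)[OF k2 f2H] yz(3) f2(2) vu by simp
        qed
      qed
    qed
  qed
  have allH: "f \<in> H" if fF: "f \<in> FF" for f
  proof -
    have fuV: "f u \<in> V" using app[OF FG[OF fF] uV] .
    obtain k where "reach adj k u (f u)" using conn uV fuV unfolding connected_graph_def by blast
    hence "reach adj k (e1 u) (f u)" using one_app[OF uV] by simp
    moreover have "f u \<in> orb u" using orbI[OF fF] by simp
    ultimately obtain f' where f': "f' \<in> H" "f u = f' u" using reachH[OF oneH] by blast
    have f'F: "f' \<in> FF" using f' H_def by simp
    have "f = f'" using semireg2[OF fF f'F uV f'(2)] .
    thus ?thesis using f' by simp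
  qed
  have "c \<in> {x \<in> carrier Gr. \<forall>f\<in>FF. x \<otimes>\<^bsub>Gr\<^esub> f = f \<otimes>\<^bsub>Gr\<^esub> x}"
  proof -
    have "\<forall>f\<in>FF. gm c f = gm f c"
    proof
      fix f assume fF: "f \<in> FF"
      have "cj c f = f" using allH[OF fF] H_def by simp
      thus "gm c f = gm f c" using group.conj_fix_comm[OF grp, of c f] cG FG[OF fF] by simp
    qed
    thus ?thesis using cG by simp
  qed
  hence cF: "c \<in> FF" using group.Fitting_selfcentralizing[OF grp solGr] by blast
  have "c u \<in> orb u" using orbI[OF cF] by simp
  moreover have "c u = (gi g) w" using c_def mult_app[OF inv_mem[OF g(1)] t(1) uV] t(2) by simp
  ultimately have "(gi g) w \<in> orb u" by simp
  hence "g ((gi g) w) \<in> orb (g u)" using orb_G[OF g(1) uV] by blast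
  hence "w \<in> orb u" using inv_app2[OF g(1) wV] g(2) by simp
  thus False using uw(2) by simp
qed

end

theorem lemma4p6:
  fixes V :: "'a set" and adj :: "'a \<Rightarrow> 'a \<Rightarrow> bool" and G :: "('a \<Rightarrow> 'a) set"
  assumes "finite V"
    and "simple_graph V adj"
    and "connected_graph V adj"
    and "aut_group V adj G"
    and "dist2_transitive V adj G"
    and "squarefree (card V)"
    and "solvable ((BijGroup V)\<lparr>carrier := G\<rparr>)"
    and "squarefree (card (Fitting ((BijGroup V)\<lparr>carrier := G\<rparr>)))"
  shows "card (vertex_orbits (Fitting ((BijGroup V)\<lparr>carrier := G\<rparr>)) V) \<noteq> 2"
proof
  assume two: "card (vertex_orbits (Fitting ((BijGroup V)\<lparr>carrier := G\<rparr>)) V) = 2"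
  interpret L4p6two V adj G
    using assms two by (unfold_locales) auto
  show False by (rule contradiction)
qed


end
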